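(* Let $r\geq 2$. There exists $c=c(r)>0$ such that the following holds. Let $H$ be an $r$-uniform hypergraph on $n$ vertices of average degree $d$, where $1\leq d\leq \frac{1}{2}\binom{n-1}{r-1}$. Then $\mathrm{disc}(H)\geq c\sqrt{d}\,n$.
   Context: For an $r$-uniform hypergraph $H$ on $n$ vertices with edge density $p=|E(H)|/\binom{n}{r}$ and $U\subset V(H)$, let $e(U)$ be the number of edges of $H$ contained in $U$ and $\mathrm{disc}(U)=e(U)-p\binom{|U|}{r}$. The discrepancy is $\mathrm{disc}(H)=\max_{U\subset V(H)}|\mathrm{disc}(U)|$. The average degree is $d=r|E(H)|/n$. *)

theory Defs
  imports Complex_Main
begin

definition uniform_hypergraph :: "nat \<Rightarrow> 'a set \<Rightarrow> 'a set set \<Rightarrow> bool" where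
  "uniform_hypergraph r V E \<longleftrightarrow> finite V \<and> (\<forall>e\<in>E. e \<subseteq> V \<and> card e = r)"

definition hg_density :: "nat \<Rightarrow> 'a set \<Rightarrow> 'a set set \<Rightarrow> real" where
  "hg_density r V E = real (card E) / real (card V choose r)"

definition hg_edges_in :: "'a set set \<Rightarrow> 'a set \<Rightarrow> nat" where
  "hg_edges_in E U = card {e \<in> E. e \<subseteq> U}"

definition hg_disc_set :: "nat \<Rightarrow> 'a set \<Rightarrow> 'a set set \<Rightarrow> 'a set \<Rightarrow> real" where
  "hg_disc_set r V E U = real (hg_edges_in E U) - hg_density r V E * real (card U choose r)"

definition hg_disc :: "nat \<Rightarrow> 'a set \<Rightarrow> 'a set set \<Rightarrow> real" where
  "hg_disc r V E = Max ((\<lambda>U. \<bar>hg_disc_set r V E U\<bar>) ` Pow V)"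

definition hg_avg_degree :: "nat \<Rightarrow> 'a set \<Rightarrow> 'a set set \<Rightarrow> real" where
  "hg_avg_degree r V E = real r * real (card E) / real (card V)"

end

theory Submission
  imports Defs "HOL-Analysis.Convex"
begin

definition avg :: "'a set \<Rightarrow> ('a set \<Rightarrow> real) \<Rightarrow> real" where
  "avg A F = (\<Sum>X\<in>Pow A. F X) / 2 ^ card A"

definition pol :: "'a set \<Rightarrow> ('a set \<Rightarrow> real) \<Rightarrow> 'a set \<Rightarrow> real" where
  "pol A a X = (\<Sum>S\<in>Pow A. a S * of_bool (S \<subseteq> X))"

lemma sum_Pow_insert:
  assumes "finite A" "w \<notin> A"
  shows "(\<Sum>X\<in>Pow (insert w A). F X) = (\<Sum>X\<in>Pow A. F X + F (insert w X))"
proof -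
  have inj: "inj_on (insert w) (Pow A)"
    using assms(2) by (auto simp: inj_on_def)
  have disj: "Pow A \<inter> insert w ` Pow A = {}" using assms(2) by auto
  have "(\<Sum>X\<in>Pow (insert w A). F X) = (\<Sum>X\<in>Pow A. F X) + (\<Sum>X\<in>insert w ` Pow A. F X)"
    unfolding Pow_insert using assms(1) disj by (intro sum.union_disjoint) auto
  also have "(\<Sum>X\<in>insert w ` Pow A. F X) = (\<Sum>X\<in>Pow A. F (insert w X))"
    using inj by (simp add: sum.reindex)
  finally show ?thesis by (simp add: sum.distrib)
qed

lemma avg_insert:
  assumes "finite A" "w \<notin> A"
  shows "avg (insert w A) F = avg A (\<lambda>X. (F X + F (insert w X)) / 2)"
  using assms unfolding avg_def
  by (simp add: sum_Pow_insert sum_divide_distrib[symmetric] field_simps)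

lemma avg_add: "avg A (\<lambda>X. F X + G X) = avg A F + avg A G"
  unfolding avg_def by (simp add: sum.distrib add_divide_distrib)

lemma avg_cmult: "avg A (\<lambda>X. c * F X) = c * avg A F"
  unfolding avg_def by (simp add: sum_distrib_left)

lemma avg_sum: "finite I \<Longrightarrow> avg A (\<lambda>X. \<Sum>i\<in>I. g i X) = (\<Sum>i\<in>I. avg A (g i))"
  unfolding avg_def by (simp add: sum.swap[of _ I] sum_divide_distrib)

lemma avg_mono: "finite A \<Longrightarrow> (\<And>X. X \<subseteq> A \<Longrightarrow> F X \<le> G X) \<Longrightarrow> avg A F \<le> avg A G"
  unfolding avg_def by (intro divide_right_mono sum_mono) auto

lemma avg_const: "finite A \<Longrightarrow> avg A (\<lambda>X. c) = c"
  unfolding avg_def by (simp add: card_Pow)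

lemma avg_le: "finite A \<Longrightarrow> (\<And>X. X \<subseteq> A \<Longrightarrow> F X \<le> M) \<Longrightarrow> avg A F \<le> M"
  using avg_mono[of A F "\<lambda>X. M"] avg_const[of A M] by simp

lemma avg_nonneg: "finite A \<Longrightarrow> (\<And>X. X \<subseteq> A \<Longrightarrow> 0 \<le> F X) \<Longrightarrow> 0 \<le> avg A F"
  using avg_mono[of A "\<lambda>X. 0" F] avg_const[of A 0] by simp

lemma avg_indicator:
  assumes "finite A" "Q \<subseteq> A"
  shows "avg A (\<lambda>X. of_bool (Q \<subseteq> X)) = (1/2) ^ card Q"
  using assms
proof (induction A arbitrary: Q rule: finite_induct)
  case empty
  then show ?case by (simp add: avg_def)
next
  case (insert w A)
  show ?case
  proof (cases "w \<in> Q")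
    case True
    define Q' where "Q' = Q - {w}"
    have Q: "Q = insert w Q'" "w \<notin> Q'" "Q' \<subseteq> A" using True insert Q'_def by auto
    have "\<And>X. X \<subseteq> A \<Longrightarrow> (of_bool (Q \<subseteq> X) + of_bool (Q \<subseteq> insert w X)) / 2 = (1/2) * (of_bool (Q' \<subseteq> X)::real)"
      using Q insert(2) by auto
    then have "avg (insert w A) (\<lambda>X. of_bool (Q \<subseteq> X)) = avg A (\<lambda>X. (1/2) * of_bool (Q' \<subseteq> X))"
      unfolding avg_insert[OF insert(1,2)] unfolding avg_def
      by (intro arg_cong[where f="\<lambda>x. x / _"] sum.cong) auto
    also have "\<dots> = (1/2) ^ card Q" using insert Q
      by (simp only: avg_cmult) (simp add: card_insert_if finite_subset)
    finally show ?thesis .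
  next
    case False
    then have QA: "Q \<subseteq> A" using insert by auto
    have "\<And>X. X \<subseteq> A \<Longrightarrow> (of_bool (Q \<subseteq> X) + of_bool (Q \<subseteq> insert w X)) / 2 = (of_bool (Q \<subseteq> X)::real)"
      using False by auto
    then have "avg (insert w A) (\<lambda>X. of_bool (Q \<subseteq> X)) = avg A (\<lambda>X. of_bool (Q \<subseteq> X))"
      unfolding avg_insert[OF insert(1,2)] unfolding avg_def
      by (intro arg_cong[where f="\<lambda>x. x / _"] sum.cong) auto
    then show ?thesis using insert QA by simp
  qed
qed

lemma pol_insert_lo:
  assumes "finite A" "w \<notin> A" "X \<subseteq> A"
  shows "pol (insert w A) a X = pol A a X"
  unfolding pol_def sum_Pow_insert[OF assms(1,2)] using assms by (intro sum.cong) auto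

lemma pol_insert_hi:
  assumes "finite A" "w \<notin> A" "X \<subseteq> A"
  shows "pol (insert w A) a (insert w X) = pol A a X + pol A (\<lambda>S. a (insert w S)) X"
proof -
  have "\<And>S. S \<subseteq> A \<Longrightarrow> (S \<subseteq> insert w X) = (S \<subseteq> X)" "\<And>S. S \<subseteq> A \<Longrightarrow> (insert w S \<subseteq> insert w X) = (S \<subseteq> X)"
    using assms by auto
  then show ?thesis unfolding pol_def sum_Pow_insert[OF assms(1,2)]
    by (simp add: sum.distrib)
qed

lemma pol_lin: "pol A (\<lambda>S. a S + t * b S) X = pol A a X + t * pol A b X"
  unfolding pol_def by (simp add: algebra_simps sum.distrib sum_distrib_left)

lemma pol_cmult: "pol A (\<lambda>S. t * b S) X = t * pol A b X"
  unfolding pol_def by (simp add: algebra_simps sum_distrib_left)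

definition degle :: "'a set \<Rightarrow> nat \<Rightarrow> ('a set \<Rightarrow> real) \<Rightarrow> bool" where
  "degle A k a \<longleftrightarrow> (\<forall>S. S \<subseteq> A \<longrightarrow> k < card S \<longrightarrow> a S = 0)"

lemma step_setup:
  fixes a :: "'a set \<Rightarrow> real"
  assumes A: "finite A" "w \<notin> A" and X: "X \<subseteq> A"
  shows "pol (insert w A) a X = pol A (\<lambda>S. a S + a (insert w S) / 2) X - pol A (\<lambda>S. a (insert w S) / 2) X"
    and "pol (insert w A) a (insert w X) = pol A (\<lambda>S. a S + a (insert w S) / 2) X + pol A (\<lambda>S. a (insert w S) / 2) X"
proof -
  have hc: "pol A (\<lambda>S. a (insert w S) / 2) X = (1/2) * pol A (\<lambda>S. a (insert w S)) X"
    using pol_cmult[of A "1/2" "\<lambda>S. a (insert w S)" X] by simp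
  have hb: "pol A (\<lambda>S. a S + a (insert w S) / 2) X = pol A a X + 1 * pol A (\<lambda>S. a (insert w S) / 2) X"
    using pol_lin[of A a 1 "\<lambda>S. a (insert w S) / 2" X] by simp
  show "pol (insert w A) a X = pol A (\<lambda>S. a S + a (insert w S) / 2) X - pol A (\<lambda>S. a (insert w S) / 2) X"
    using pol_insert_lo[OF A X] hb by simp
  show "pol (insert w A) a (insert w X) = pol A (\<lambda>S. a S + a (insert w S) / 2) X + pol A (\<lambda>S. a (insert w S) / 2) X"
    using pol_insert_hi[OF A X] hb hc by simp
qed

lemma degle_b:
  assumes "finite A" "w \<notin> A" "degle (insert w A) k a"
  shows "degle A k (\<lambda>S. a S + a (insert w S) / 2)"
  unfolding degle_def
proof (intro allI impI)
  fix S assume S: "S \<subseteq> A" "k < card S"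
  have fin: "finite S" using S assms(1) finite_subset by blast
  have "w \<notin> S" using S assms(2) by auto
  then have c: "card (insert w S) = Suc (card S)" using fin by simp
  have "a S = 0" using assms(3) S unfolding degle_def by auto
  moreover have "a (insert w S) = 0"
  proof -
    have "k < card (insert w S)" "insert w S \<subseteq> insert w A" using S c by auto
    then show ?thesis using assms(3) unfolding degle_def by blast
  qed
  ultimately show "a S + a (insert w S) / 2 = 0" by simp
qed

lemma degle_c:
  assumes "finite A" "w \<notin> A" "degle (insert w A) (Suc k) a"
  shows "degle A k (\<lambda>S. a (insert w S) / 2)"
  unfolding degle_def
proof (intro allI impI)
  fix S assume S: "S \<subseteq> A" "k < card S"
  have fin: "finite S" using S assms(1) finite_subset by blast
  have "w \<notin> S" using S assms(2) by auto
  then have c: "card (insert w S) = Suc (card S)" using fin by simp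
  have "Suc k < card (insert w S)" "insert w S \<subseteq> insert w A" using S c by auto
  then have "a (insert w S) = 0" using assms(3) unfolding degle_def by blast
  then show "a (insert w S) / 2 = 0" by simp
qed

lemma degle_c0:
  assumes "finite A" "w \<notin> A" "degle (insert w A) 0 a" "S \<subseteq> A"
  shows "a (insert w S) / 2 = 0"
proof -
  have "finite S" using assms finite_subset by blast
  then have "0 < card (insert w S)" "insert w S \<subseteq> insert w A" using assms by (auto simp: card_gt_0_iff)
  then show ?thesis using assms(3) unfolding degle_def by simp
qed

lemma avg_sq_insert:
  fixes a :: "'a set \<Rightarrow> real"
  assumes A: "finite A" "w \<notin> A"
  shows "avg (insert w A) (\<lambda>X. (pol (insert w A) a X)^2) = avg A (\<lambda>X. (pol A (\<lambda>S. a S + a (insert w S) / 2) X)^2) + avg A (\<lambda>X. (pol A (\<lambda>S. a (insert w S) / 2) X)^2)"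
proof -
  have "avg (insert w A) (\<lambda>X. (pol (insert w A) a X)^2) = avg A (\<lambda>X. (pol A (\<lambda>S. a S + a (insert w S) / 2) X)^2 + (pol A (\<lambda>S. a (insert w S) / 2) X)^2)"
    unfolding avg_insert[OF A] unfolding avg_def
    by (intro arg_cong[where f="\<lambda>x. x / _"] sum.cong refl)
       (simp add: step_setup[OF A] power2_eq_square algebra_simps)
  then show ?thesis by (simp add: avg_add)
qed

lemma avg_4_insert:
  fixes a :: "'a set \<Rightarrow> real"
  assumes A: "finite A" "w \<notin> A"
  shows "avg (insert w A) (\<lambda>X. (pol (insert w A) a X)^4) = avg A (\<lambda>X. (pol A (\<lambda>S. a S + a (insert w S) / 2) X)^4) + 6 * avg A (\<lambda>X. (pol A (\<lambda>S. a S + a (insert w S) / 2) X)^2 * (pol A (\<lambda>S. a (insert w S) / 2) X)^2) + avg A (\<lambda>X. (pol A (\<lambda>S. a (insert w S) / 2) X)^4)"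
proof -
  have "avg (insert w A) (\<lambda>X. (pol (insert w A) a X)^4) = avg A (\<lambda>X. (pol A (\<lambda>S. a S + a (insert w S) / 2) X)^4 + (6 * ((pol A (\<lambda>S. a S + a (insert w S) / 2) X)^2 * (pol A (\<lambda>S. a (insert w S) / 2) X)^2) + (pol A (\<lambda>S. a (insert w S) / 2) X)^4))"
    unfolding avg_insert[OF A] unfolding avg_def
    by (intro arg_cong[where f="\<lambda>x. x / _"] sum.cong refl)
       (simp add: step_setup[OF A] power2_eq_square power4_eq_xxxx algebra_simps)
  then show ?thesis by (simp add: avg_add avg_cmult)
qed

lemma avg_CS: "(avg A (\<lambda>X. F X * G X))^2 \<le> avg A (\<lambda>X. (F X)^2) * avg A (\<lambda>X. (G X)^2)"
proof -
  have "(avg A (\<lambda>X. F X * G X))^2 = (\<Sum>X\<in>Pow A. F X * G X)^2 / (2 ^ card A)^2"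
    unfolding avg_def by (simp add: power_divide)
  also have "\<dots> \<le> ((\<Sum>X\<in>Pow A. (F X)^2) * (\<Sum>X\<in>Pow A. (G X)^2)) / (2 ^ card A)^2"
    by (intro divide_right_mono Cauchy_Schwarz_ineq_sum) auto
  also have "\<dots> = avg A (\<lambda>X. (F X)^2) * avg A (\<lambda>X. (G X)^2)"
    unfolding avg_def by (simp add: power2_eq_square)
  finally show ?thesis .
qed

lemma pow22: "((x::real)^2)^2 = x^4"
  by (simp add: power4_eq_xxxx power2_eq_square)

lemma pol_zero: "(\<And>S. S \<subseteq> A \<Longrightarrow> a S = 0) \<Longrightarrow> pol A a X = 0"
  unfolding pol_def by (intro sum.neutral) auto

lemma bonami:
  assumes "finite A" "degle A k a"
  shows "avg A (\<lambda>X. (pol A a X)^4) \<le> 9^k * (avg A (\<lambda>X. (pol A a X)^2))^2"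
  using assms
proof (induction A arbitrary: a k rule: finite_induct)
  case empty
  have "(1::real) \<le> 9^k" by simp
  moreover have "0 \<le> (pol {} a {})^4" by simp
  ultimately show ?case by (simp add: avg_def power4_eq_xxxx power2_eq_square mult_le_cancel_right1 
      order_trans[OF _ mult_right_mono[of 1 "9^k"]])
next
  case (insert w A)
  define c where "c = (\<lambda>S. a (insert w S) / 2)"
  define b where "b = (\<lambda>S. a S + c S)"
  have db: "degle A k b" unfolding b_def c_def using degle_b[OF insert(1,2) insert.prems] .
  have IHb: "avg A (\<lambda>X. (pol A b X)^4) \<le> 9^k * (avg A (\<lambda>X. (pol A b X)^2))^2"
    using insert.IH[OF db] .
  have e4: "avg (insert w A) (\<lambda>X. (pol (insert w A) a X)^4) = avg A (\<lambda>X. (pol A b X)^4) + 6 * avg A (\<lambda>X. (pol A b X)^2 * (pol A c X)^2) + avg A (\<lambda>X. (pol A c X)^4)"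
    unfolding b_def c_def using avg_4_insert[OF insert(1,2)] .
  have e2: "avg (insert w A) (\<lambda>X. (pol (insert w A) a X)^2) = avg A (\<lambda>X. (pol A b X)^2) + avg A (\<lambda>X. (pol A c X)^2)"
    unfolding b_def c_def using avg_sq_insert[OF insert(1,2)] .
  define \<beta> where "\<beta> = avg A (\<lambda>X. (pol A b X)^2)"
  define \<gamma> where "\<gamma> = avg A (\<lambda>X. (pol A c X)^2)"
  have b0: "0 \<le> \<beta>" unfolding \<beta>_def by (rule avg_nonneg[OF insert(1)]) simp
  have g0: "0 \<le> \<gamma>" unfolding \<gamma>_def by (rule avg_nonneg[OF insert(1)]) simp
  show ?case
  proof (cases k)
    case 0
    have "\<And>X. pol A c X = 0" unfolding c_def using degle_c0[OF insert(1,2) insert.prems[unfolded 0]]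
      by (intro pol_zero) auto
    then show ?thesis using e4 e2 IHb avg_const[OF insert(1), of 0] by simp
  next
    case (Suc k')
    have h9: "(9::real)^k = 9 * 9^k'" using Suc by simp
    have dc: "degle A k' c" unfolding c_def using degle_c[OF insert(1,2) insert.prems[unfolded Suc]] .
    have IHc: "avg A (\<lambda>X. (pol A c X)^4) \<le> 9^k' * \<gamma>^2"
      using insert.IH[OF dc] unfolding \<gamma>_def .
    have cs: "(avg A (\<lambda>X. (pol A b X)^2 * (pol A c X)^2))^2 \<le> avg A (\<lambda>X. (pol A b X)^4) * avg A (\<lambda>X. (pol A c X)^4)"
      using avg_CS[of A "\<lambda>X. (pol A b X)^2" "\<lambda>X. (pol A c X)^2"] unfolding pow22 .
    have "avg A (\<lambda>X. (pol A b X)^4) * avg A (\<lambda>X. (pol A c X)^4) \<le> (9^k * \<beta>^2) * (9^k' * \<gamma>^2)"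
      using IHb IHc unfolding \<beta>_def[symmetric]
      by (intro mult_mono) (auto intro!: avg_nonneg[OF insert(1)])
    also have "(9^k * \<beta>^2) * (9^k' * \<gamma>^2) = (3 * 9^k' * \<beta> * \<gamma>)^2"
      unfolding h9 by algebra
    finally have sq: "(avg A (\<lambda>X. (pol A b X)^2 * (pol A c X)^2))^2 \<le> (3 * 9^k' * \<beta> * \<gamma>)^2" using cs by linarith
    have nn: "0 \<le> 3 * 9^k' * \<beta> * \<gamma>" using b0 g0 by simp
    have cross: "avg A (\<lambda>X. (pol A b X)^2 * (pol A c X)^2) \<le> 3 * 9^k' * \<beta> * \<gamma>"
      by (rule power2_le_imp_le[OF sq nn])
    have "avg (insert w A) (\<lambda>X. (pol (insert w A) a X)^4) \<le> 9^k * \<beta>^2 + 6 * (3 * 9^k' * \<beta> * \<gamma>) + 9^k' * \<gamma>^2"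
      using IHb IHc cross unfolding e4 \<beta>_def[symmetric] by linarith
    also have "\<dots> \<le> 9^k * (\<beta> + \<gamma>)^2"
    proof -
      have "9^k' * \<gamma>^2 \<le> 9^k * \<gamma>^2" using Suc by (intro mult_right_mono) auto
      moreover have "6 * (3 * 9^k' * \<beta> * \<gamma>) = 2 * 9^k * \<beta> * \<gamma>" unfolding h9 by algebra
      moreover have "9^k*(\<beta>+\<gamma>)^2 = 9^k*\<beta>^2 + 2*9^k*\<beta>*\<gamma> + 9^k*\<gamma>^2"
        by algebra
      ultimately show ?thesis by linarith
    qed
    finally show ?thesis unfolding e2 \<beta>_def \<gamma>_def .
  qed
qed


lemma top_weight:
  assumes "finite A" "degle A k a"
  shows "(1/4)^k * (\<Sum>S\<in>Pow A. if card S = k then (a S)^2 else 0) \<le> avg A (\<lambda>X. (pol A a X)^2)"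
  using assms
proof (induction A arbitrary: a k rule: finite_induct)
  case empty
  show ?case by (cases k) (auto simp: avg_def pol_def Pow_empty)
next
  case (insert w A)
  define c where "c = (\<lambda>S. a (insert w S) / 2)"
  define b where "b = (\<lambda>S. a S + c S)"
  have db: "degle A k b" unfolding b_def c_def using degle_b[OF insert(1,2) insert.prems] .
  have e2: "avg (insert w A) (\<lambda>X. (pol (insert w A) a X)^2) = avg A (\<lambda>X. (pol A b X)^2) + avg A (\<lambda>X. (pol A c X)^2)"
    unfolding b_def c_def using avg_sq_insert[OF insert(1,2)] .
  have g0: "0 \<le> avg A (\<lambda>X. (pol A c X)^2)" by (rule avg_nonneg[OF insert(1)]) simp
  have cardins: "\<And>S. S \<subseteq> A \<Longrightarrow> card (insert w S) = Suc (card S)"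
    using insert(1,2) by (metis card_insert_disjoint finite_subset subsetD)
  have split: "(\<Sum>S\<in>Pow (insert w A). if card S = k then (a S)^2 else 0) =
     (\<Sum>S\<in>Pow A. (if card S = k then (a S)^2 else 0) + (if Suc (card S) = k then (a (insert w S))^2 else 0))"
    unfolding sum_Pow_insert[OF insert(1,2)] using cardins by (intro sum.cong) auto
  show ?case
  proof (cases k)
    case 0
    have cz: "\<And>S. S \<subseteq> A \<Longrightarrow> c S = 0" unfolding c_def using degle_c0[OF insert(1,2) insert.prems[unfolded 0]] .
    have "(\<Sum>S\<in>Pow (insert w A). if card S = k then (a S)^2 else 0) = (\<Sum>S\<in>Pow A. if card S = k then (b S)^2 else 0)"
      unfolding split using cz 0 by (intro sum.cong) (auto simp: b_def)
    also have "\<dots> \<le> avg A (\<lambda>X. (pol A b X)^2)" using insert.IH[OF db] 0 by simp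
    finally show ?thesis using e2 g0 0 by simp
  next
    case (Suc k')
    have dc: "degle A k' c" unfolding c_def using degle_c[OF insert(1,2) insert.prems[unfolded Suc]] .
    have IHb: "(1/4)^k * (\<Sum>S\<in>Pow A. if card S = k then (b S)^2 else 0) \<le> avg A (\<lambda>X. (pol A b X)^2)"
      using insert.IH[OF db] .
    have IHc: "(1/4)^k' * (\<Sum>S\<in>Pow A. if card S = k' then (c S)^2 else 0) \<le> avg A (\<lambda>X. (pol A c X)^2)"
      using insert.IH[OF dc] .
    have bS: "\<And>S. S \<subseteq> A \<Longrightarrow> card S = k \<Longrightarrow> b S = a S"
    proof -
      fix S assume S: "S \<subseteq> A" "card S = k"
      have "k < card (insert w S)" "insert w S \<subseteq> insert w A" using S cardins by auto
      then have "a (insert w S) = 0" using insert.prems unfolding degle_def by blast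
      then show "b S = a S" unfolding b_def c_def by simp
    qed
    have "(1/4)^k * (\<Sum>S\<in>Pow (insert w A). if card S = k then (a S)^2 else 0) =
       (1/4)^k * (\<Sum>S\<in>Pow A. if card S = k then (b S)^2 else 0) + (1/4)^k' * (\<Sum>S\<in>Pow A. if card S = k' then (c S)^2 else 0)"
    proof -
      have "(\<Sum>S\<in>Pow (insert w A). if card S = k then (a S)^2 else 0) =
         (\<Sum>S\<in>Pow A. if card S = k then (b S)^2 else 0) + (\<Sum>S\<in>Pow A. if card S = k' then (a (insert w S))^2 else 0)"
        unfolding split sum.distrib[symmetric] using bS Suc by (intro sum.cong) auto
      moreover have "(\<Sum>S\<in>Pow A. if card S = k' then (c S)^2 else 0) = (1/4) * (\<Sum>S\<in>Pow A. if card S = k' then (a (insert w S))^2 else 0)"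
        unfolding sum_distrib_left c_def by (intro sum.cong) (auto simp: power2_eq_square)
      ultimately show ?thesis using Suc by (simp add: algebra_simps)
    qed
    then show ?thesis using e2 IHb IHc by linarith
  qed
qed

lemma avg_diff: "avg A (\<lambda>X. F X - G X) = avg A F - avg A G"
  unfolding avg_def by (simp add: sum_subtractf diff_divide_distrib)

lemma abs_lower: "0 < (l::real) \<Longrightarrow> 3 * l^2 * x^2 - x^4 \<le> 2 * l^3 * \<bar>x\<bar>"
proof -
  assume l: "0 < l"
  define u where "u = \<bar>x\<bar>"
  have u: "0 \<le> u" "x^2 = u^2" "x^4 = u^4" unfolding u_def by (auto simp: power_even_abs)
  have "2 * l^3 * u - (3 * l^2 * u^2 - u^4) = u * (u - l)^2 * (u + 2 * l)" by algebra
  moreover have "0 \<le> u * (u - l)^2 * (u + 2 * l)" using u l by simp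
  moreover have "3*l^2*x^2 - x^4 = 3*l^2*u^2 - u^4" using u by simp
  ultimately show ?thesis unfolding u_def by linarith
qed

lemma avg_abs_lower:
  assumes "finite A" "degle A k a"
  shows "(1/3)^k * sqrt (avg A (\<lambda>X. (pol A a X)^2)) \<le> avg A (\<lambda>X. \<bar>pol A a X\<bar>)"
proof -
  define m2 where "m2 = avg A (\<lambda>X. (pol A a X)^2)"
  define m4 where "m4 = avg A (\<lambda>X. (pol A a X)^4)"
  define m1 where "m1 = avg A (\<lambda>X. \<bar>pol A a X\<bar>)"
  have m2n: "0 \<le> m2" unfolding m2_def by (rule avg_nonneg[OF assms(1)]) simp
  have m1n: "0 \<le> m1" unfolding m1_def by (rule avg_nonneg[OF assms(1)]) simp
  have b: "m4 \<le> 9^k * m2^2" unfolding m4_def m2_def by (rule bonami[OF assms])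
  show ?thesis
  proof (cases "m2 = 0")
    case True
    then show ?thesis using m1n unfolding m1_def m2_def by simp
  next
    case False
    define s where "s = sqrt m2"
    have s: "0 < s" "m2 = s^2" using False m2n unfolding s_def by auto
    define l where "l = 3^k * s"
    have l: "0 < l" unfolding l_def using s by simp
    have "avg A (\<lambda>X. 3 * l^2 * (pol A a X)^2 - (pol A a X)^4) \<le> avg A (\<lambda>X. 2 * l^3 * \<bar>pol A a X\<bar>)"
      by (rule avg_mono[OF assms(1)]) (rule abs_lower[OF l])
    then have "3 * l^2 * m2 - m4 \<le> 2 * l^3 * m1"
      unfolding m1_def m2_def m4_def by (simp add: avg_cmult avg_diff)
    then have ineq: "3 * l^2 * m2 - 9^k * m2^2 \<le> 2 * l^3 * m1" using b by linarith
    have h33: "(3::real)^k * 3^k = 9^k"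
    proof -
      have "(9::real)^k = (3*3)^k" by simp
      also have "\<dots> = 3^k * 3^k" by (rule power_mult_distrib)
      finally show ?thesis by simp
    qed
    have e1: "3 * l^2 * m2 - 9^k * m2^2 = 2 * 9^k * s^4"
      unfolding l_def s(2) by (simp add: power_mult_distrib power2_eq_square power4_eq_xxxx h33 flip: power_mult)
    have e2: "2 * l^3 * m1 = 2 * 9^k * s^4 * (m1 / ((1/3)^k * s))"
      unfolding l_def using s by (simp add: power_mult_distrib field_simps power3_eq_cube power4_eq_xxxx h33 flip: power_mult)
    have "2 * 9^k * s^4 * 1 \<le> 2 * 9^k * s^4 * (m1 / ((1/3)^k * s))" using ineq e1 e2 by simp
    then have "1 \<le> m1 / ((1/3)^k * s)" using s by (subst (asm) mult_le_cancel_left_pos) auto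
    then have "s \<le> m1 * 3^k" using s by (simp add: field_simps)
    then show ?thesis unfolding m1_def[symmetric] m2_def[symmetric] s_def[symmetric] by (simp add: field_simps)
  qed
qed

definition fT :: "nat \<Rightarrow> 'a set \<Rightarrow> 'a set set \<Rightarrow> 'a set \<Rightarrow> real" where
  "fT r V E T = of_bool (T \<in> E) - hg_density r V E"

definition ksets :: "nat \<Rightarrow> 'a set \<Rightarrow> 'a set set" where
  "ksets r U = {T. T \<subseteq> U \<and> card T = r}"

lemma ksets_finite: "finite U \<Longrightarrow> finite (ksets r U)"
  unfolding ksets_def by (rule finite_subset[of _ "Pow U"]) auto

lemma card_ksets: "finite U \<Longrightarrow> card (ksets r U) = card U choose r"
  unfolding ksets_def by (rule n_subsets)

lemma disc_sum:
  assumes H: "uniform_hypergraph r V E" and U: "U \<subseteq> V"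
  shows "hg_disc_set r V E U = (\<Sum>T\<in>ksets r U. fT r V E T)"
proof -
  have fV: "finite V" using H unfolding uniform_hypergraph_def by auto
  have fU: "finite U" using fV U finite_subset by blast
  have eq: "{e \<in> E. e \<subseteq> U} = ksets r U \<inter> {T. T \<in> E}"
    using H unfolding uniform_hypergraph_def ksets_def by auto
  have "(\<Sum>T\<in>ksets r U. fT r V E T) = (\<Sum>T\<in>ksets r U. of_bool (T \<in> E)) - (\<Sum>T\<in>ksets r U. hg_density r V E)"
    unfolding fT_def by (simp add: sum_subtractf)
  also have "\<dots> = real (card {e \<in> E. e \<subseteq> U}) - hg_density r V E * real (card U choose r)"
    using ksets_finite[OF fU] card_ksets[OF fU] eq by simp
  finally show ?thesis unfolding hg_disc_set_def hg_edges_in_def by simp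
qed

lemma disc_le:
  assumes H: "uniform_hypergraph r V E" and U: "U \<subseteq> V"
  shows "\<bar>hg_disc_set r V E U\<bar> \<le> hg_disc r V E"
proof -
  have fV: "finite V" using H unfolding uniform_hypergraph_def by auto
  show ?thesis unfolding hg_disc_def using fV U by (intro Max_ge) auto
qed

lemma caseA_avg:
  assumes H: "uniform_hypergraph r V E" and S: "S \<subseteq> V"
  shows "avg (V - S) (\<lambda>R. hg_disc_set r V E (S \<union> R)) = (\<Sum>T\<in>ksets r V. fT r V E T * (1/2)^card (T - S))"
proof -
  have fV: "finite V" using H unfolding uniform_hypergraph_def by auto
  have "\<And>R. R \<subseteq> V - S \<Longrightarrow> hg_disc_set r V E (S \<union> R) = (\<Sum>T\<in>ksets r V. fT r V E T * of_bool (T - S \<subseteq> R))"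
  proof -
    fix R assume R: "R \<subseteq> V - S"
    have "ksets r V \<inter> {T. T - S \<subseteq> R} = ksets r (S \<union> R)" using R S unfolding ksets_def by auto
    then show "hg_disc_set r V E (S \<union> R) = (\<Sum>T\<in>ksets r V. fT r V E T * of_bool (T - S \<subseteq> R))"
      using disc_sum[OF H, of "S \<union> R"] R S ksets_finite[OF fV] by auto
  qed
  then have "avg (V - S) (\<lambda>R. hg_disc_set r V E (S \<union> R)) = avg (V - S) (\<lambda>R. \<Sum>T\<in>ksets r V. fT r V E T * of_bool (T - S \<subseteq> R))"
    unfolding avg_def by (intro arg_cong[where f="\<lambda>x. x / _"] sum.cong) auto
  also have "\<dots> = (\<Sum>T\<in>ksets r V. fT r V E T * avg (V - S) (\<lambda>R. of_bool (T - S \<subseteq> R)))"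
    by (subst avg_sum[OF ksets_finite[OF fV]]) (simp only: avg_cmult)
  also have "\<dots> = (\<Sum>T\<in>ksets r V. fT r V E T * (1/2)^card (T - S))"
  proof (intro sum.cong refl)
    fix T assume "T \<in> ksets r V"
    then have "T - S \<subseteq> V - S" unfolding ksets_def by auto
    then show "fT r V E T * avg (V - S) (\<lambda>R. of_bool (T - S \<subseteq> R)) = fT r V E T * (1/2)^card (T - S)"
      using avg_indicator[of "V - S" "T - S"] fV by simp
  qed
  finally show ?thesis .
qed

definition deg :: "'a set set \<Rightarrow> 'a \<Rightarrow> nat" where
  "deg E v = card {e \<in> E. v \<in> e}"

lemma double_count:
  assumes "finite F" "finite S"
  shows "(\<Sum>v\<in>S. real (card {T \<in> F. v \<in> T})) = (\<Sum>T\<in>F. real (card (T \<inter> S)))"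
proof -
  have "(\<Sum>v\<in>S. real (card {T \<in> F. v \<in> T})) = (\<Sum>v\<in>S. \<Sum>T\<in>F. of_bool (v \<in> T))"
  proof (intro sum.cong refl)
    fix v
    have eq: "{T \<in> F. v \<in> T} = F \<inter> {T. v \<in> T}" by auto
    have a: "(\<Sum>T\<in>F. of_bool (v \<in> T)) = real (card (F \<inter> {T. v \<in> T}))"
      by (rule sum_of_bool_eq[OF assms(1) assms(1)])
    show "real (card {T \<in> F. v \<in> T}) = (\<Sum>T\<in>F. of_bool (v \<in> T))"
      by (simp only: eq a)
  qed
  also have "\<dots> = (\<Sum>T\<in>F. \<Sum>v\<in>S. of_bool (v \<in> T))" by (rule sum.swap)
  also have "\<dots> = (\<Sum>T\<in>F. real (card (T \<inter> S)))"
  proof (intro sum.cong refl)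
    fix T
    have eq: "S \<inter> {v. v \<in> T} = T \<inter> S" by auto
    have a: "(\<Sum>v\<in>S. of_bool (v \<in> T)) = real (card (S \<inter> {v. v \<in> T}))"
      by (rule sum_of_bool_eq[OF assms(2) assms(2)])
    show "(\<Sum>v\<in>S. of_bool (v \<in> T)) = real (card (T \<inter> S))"
      by (simp only: eq a)
  qed
  finally show ?thesis .
qed

lemma count_containing:
  assumes "finite V" "v \<in> V" "1 \<le> r"
  shows "card {T \<in> ksets r V. v \<in> T} \<le> (card V - 1) choose (r - 1)"
proof -
  have inj: "inj_on (\<lambda>T. T - {v}) {T \<in> ksets r V. v \<in> T}"
  proof (rule inj_onI)
    fix T T' assume "T \<in> {T \<in> ksets r V. v \<in> T}" "T' \<in> {T \<in> ksets r V. v \<in> T}" "T - {v} = T' - {v}"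
    then show "T = T'" by (metis (no_types, lifting) insert_Diff mem_Collect_eq)
  qed
  have sub:  "(\<lambda>T. T - {v}) ` {T \<in> ksets r V. v \<in> T} \<subseteq> ksets (r - 1) (V - {v})"
  proof
    fix X assume "X \<in> (\<lambda>T. T - {v}) ` {T \<in> ksets r V. v \<in> T}"
    then obtain T where T: "T \<subseteq> V" "card T = r" "v \<in> T" "X = T - {v}" unfolding ksets_def by auto
    have "finite T" using T(1) assms(1) finite_subset by blast
    then have "card X = r - 1" using T by simp
    then show "X \<in> ksets (r - 1) (V - {v})" using T unfolding ksets_def by auto
  qed
  have fin: "finite (ksets (r - 1) (V - {v}))" using assms ksets_finite by blast
  have "card {T \<in> ksets r V. v \<in> T} = card ((\<lambda>T. T - {v}) ` {T \<in> ksets r V. v \<in> T})"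
    by (rule card_image[OF inj, symmetric])
  also have "\<dots> \<le> card (ksets (r - 1) (V - {v}))" by (rule card_mono[OF fin sub])
  finally have "card {T \<in> ksets r V. v \<in> T} \<le> card (ksets (r - 1) (V - {v}))" .
  also have "\<dots> = (card V - 1) choose (r - 1)" using assms by (simp add: card_ksets)
  finally show ?thesis .
qed

lemma two_pow_ge: "1 + real j \<le> 2 ^ j"
proof (induction j)
  case 0 then show ?case by simp
next
  case (Suc j) then show ?case by simp
qed

lemma weight_bounds:
  assumes "finite T" "card T = r"
  shows "(1/2)^r * (1 + real (card (T \<inter> S))) \<le> (1/2::real)^card (T - S)"
    and "(1/2::real)^card (T - S) \<le> (1/2)^r + real (card (T \<inter> S))"
proof -
  have c: "card (T - S) + card (T \<inter> S) = r"
  proof -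
    have e: "T = (T - S) \<union> (T \<inter> S)" by auto
    have "card ((T - S) \<union> (T \<inter> S)) = card (T - S) + card (T \<inter> S)"
      by (rule card_Un_disjoint) (use assms(1) in auto)
    then have "card T = card (T - S) + card (T \<inter> S)" using e by simp
    then show ?thesis using assms(2) by simp
  qed
  have "(1/2::real)^card (T - S) = (1/2)^r * 2^card (T \<inter> S)"
  proof -
    have "(1/2::real)^r * 2^card (T \<inter> S) = (1/2)^card (T - S) * ((1/2)^card (T \<inter> S) * 2^card (T \<inter> S))"
      unfolding c[symmetric] power_add by simp
    also have "\<dots> = (1/2)^card (T - S)" by (simp add: power_mult_distrib[symmetric])
    finally show ?thesis by simp
  qed
  then show "(1/2)^r * (1 + real (card (T \<inter> S))) \<le> (1/2::real)^card (T - S)"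
    using two_pow_ge[of "card (T \<inter> S)"] by simp
  show "(1/2::real)^card (T - S) \<le> (1/2)^r + real (card (T \<inter> S))"
  proof (cases "T \<inter> S = {}")
    case True
    then have "T - S = T" by auto
    then show ?thesis using assms by simp
  next
    case False
    then have "1 \<le> card (T \<inter> S)" using assms by (simp add: Suc_le_eq card_gt_0_iff)
    moreover have "(1/2::real)^card (T - S) \<le> 1" by (simp add: power_le_one)
    moreover have "0 \<le> (1/2::real)^r" by simp
    ultimately show ?thesis by linarith
  qed
qed


lemma caseA_bound:
  assumes H: "uniform_hypergraph r V E" and S: "S \<subseteq> V"
    and pm: "hg_density r V E * real (card V choose r) = real (card E)" and p0: "0 \<le> hg_density r V E"
  shows "(1/2)^r * (\<Sum>e\<in>E. real (card (e \<inter> S))) - hg_density r V E * (\<Sum>T\<in>ksets r V. real (card (T \<inter> S)))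
         \<le> (\<Sum>T\<in>ksets r V. fT r V E T * (1/2)^card (T - S))"
proof -
  define p where "p = hg_density r V E"
  define w where "w = (\<lambda>T. (1/2::real)^card (T - S))"
  have fV: "finite V" using H unfolding uniform_hypergraph_def by auto
  have Ek: "E \<subseteq> ksets r V" using H unfolding uniform_hypergraph_def ksets_def by auto
  have fK: "finite (ksets r V)" using ksets_finite[OF fV] .
  have fE: "finite E" using Ek fK finite_subset by blast
  have "(\<Sum>T\<in>ksets r V. fT r V E T * w T) = (\<Sum>T\<in>ksets r V. of_bool (T \<in> E) * w T) - p * (\<Sum>T\<in>ksets r V. w T)"
    unfolding fT_def p_def by (simp add: algebra_simps sum_subtractf sum_distrib_left)
  also have "(\<Sum>T\<in>ksets r V. of_bool (T \<in> E) * w T) = (\<Sum>e\<in>E. w e)"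
  proof -
    have "ksets r V \<inter> {T. T \<in> E} = E" using Ek by auto
    then show ?thesis using sum_of_bool_mult_eq[OF fK, of "\<lambda>T. T \<in> E" w] by simp
  qed
  finally have eq: "(\<Sum>T\<in>ksets r V. fT r V E T * w T) = (\<Sum>e\<in>E. w e) - p * (\<Sum>T\<in>ksets r V. w T)" .
  have lo: "(\<Sum>e\<in>E. (1/2)^r * (1 + real (card (e \<inter> S)))) \<le> (\<Sum>e\<in>E. w e)"
  proof (rule sum_mono)
    fix e assume "e \<in> E"
    then have "finite e" "card e = r" using Ek fV unfolding ksets_def by (auto intro: finite_subset)
    then show "(1/2)^r * (1 + real (card (e \<inter> S))) \<le> w e" unfolding w_def by (rule weight_bounds(1))
  qed
  have hi: "(\<Sum>T\<in>ksets r V. w T) \<le> (\<Sum>T\<in>ksets r V. (1/2)^r + real (card (T \<inter> S)))"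
  proof (rule sum_mono)
    fix T assume "T \<in> ksets r V"
    then have "finite T" "card T = r" using fV unfolding ksets_def by (auto intro: finite_subset)
    then show "w T \<le> (1/2)^r + real (card (T \<inter> S))" unfolding w_def by (rule weight_bounds(2))
  qed
  have s1: "(\<Sum>e\<in>E. (1/2)^r * (1 + real (card (e \<inter> S)))) = (1/2)^r * real (card E) + (1/2)^r * (\<Sum>e\<in>E. real (card (e \<inter> S)))"
    by (simp add: sum_distrib_left sum.distrib algebra_simps)
  have s2: "(\<Sum>T\<in>ksets r V. (1/2::real)^r + real (card (T \<inter> S))) = (1/2)^r * real (card V choose r) + (\<Sum>T\<in>ksets r V. real (card (T \<inter> S)))"
    using card_ksets[OF fV] by (simp add: sum.distrib)
  have "p * (\<Sum>T\<in>ksets r V. w T) \<le> p * ((1/2)^r * real (card V choose r) + (\<Sum>T\<in>ksets r V. real (card (T \<inter> S))))"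
    using hi s2 p0 unfolding p_def by (simp add: mult_left_mono)
  also have "\<dots> = (1/2)^r * real (card E) + p * (\<Sum>T\<in>ksets r V. real (card (T \<inter> S)))"
    using pm unfolding p_def by (simp add: algebra_simps)
  finally have "p * (\<Sum>T\<in>ksets r V. w T) \<le> (1/2)^r * real (card E) + p * (\<Sum>T\<in>ksets r V. real (card (T \<inter> S)))" .
  then show ?thesis using eq lo s1 unfolding w_def p_def by linarith
qed

lemma IE_pow:
  assumes "finite N" "K \<subseteq> N"
  shows "(\<Sum>J\<in>Pow N. of_bool (K \<subseteq> J) * (-1::real)^card (N - J)) = of_bool (K = N)"
  using assms
proof (induction N arbitrary: K rule: finite_induct)
  case empty
  then show ?case by simp
next
  case (insert w N)
  have cd1: "\<And>J. J \<subseteq> N \<Longrightarrow> card (insert w N - J) = Suc (card (N - J))"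
  proof -
    fix J assume "J \<subseteq> N"
    then have "insert w N - J = insert w (N - J)" "w \<notin> N - J" using insert(2) by auto
    then show "card (insert w N - J) = Suc (card (N - J))" using insert(1) by simp
  qed
  have cd2: "\<And>J. J \<subseteq> N \<Longrightarrow> insert w N - insert w J = N - J" using insert(2) by auto
  show ?case
  proof (cases "w \<in> K")
    case True
    define K' where "K' = K - {w}"
    have K': "K' \<subseteq> N" "K = insert w K'" using insert.prems True insert(2) unfolding K'_def by auto
    have "(\<Sum>J\<in>Pow (insert w N). of_bool (K \<subseteq> J) * (-1::real)^card (insert w N - J))
        = (\<Sum>J\<in>Pow N. of_bool (K' \<subseteq> J) * (-1::real)^card (N - J))"
      unfolding sum_Pow_insert[OF insert(1,2)]
    proof (intro sum.cong refl)
      fix J assume J: "J \<in> Pow N"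
      then have "\<not> K \<subseteq> J" using True insert(2) by auto
      moreover have "(K \<subseteq> insert w J) = (K' \<subseteq> J)" using K' J insert(2) by auto
      ultimately show "of_bool (K \<subseteq> J) * (-1::real)^card (insert w N - J) + of_bool (K \<subseteq> insert w J) * (-1)^card (insert w N - insert w J)
          = of_bool (K' \<subseteq> J) * (-1)^card (N - J)" using cd2 J by simp
    qed
    also have "\<dots> = of_bool (K' = N)" using insert.IH[OF K'(1)] .
    also have "\<dots> = of_bool (K = insert w N)" using K' insert(2) by auto
    finally show ?thesis .
  next
    case False
    have "(\<Sum>J\<in>Pow (insert w N). of_bool (K \<subseteq> J) * (-1::real)^card (insert w N - J)) = 0"
      unfolding sum_Pow_insert[OF insert(1,2)]
    proof (intro sum.neutral ballI)
      fix J assume J: "J \<in> Pow N"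
      have "(K \<subseteq> insert w J) = (K \<subseteq> J)" using False by auto
      then show "of_bool (K \<subseteq> J) * (-1::real)^card (insert w N - J) + of_bool (K \<subseteq> insert w J) * (-1)^card (insert w N - insert w J) = 0"
        using cd1[of J] cd2[of J] J by simp
    qed
    moreover have "K \<noteq> insert w N" using False by auto
    ultimately show ?thesis by simp
  qed
qed

definition Gsum :: "nat \<Rightarrow> 'a set \<Rightarrow> 'a set set \<Rightarrow> ('a \<Rightarrow> nat) \<Rightarrow> 'a set \<Rightarrow> real" where
  "Gsum r V E \<kappa> Z = (\<Sum>T\<in>{T \<in> ksets r Z. \<kappa> ` T = {..<r}}. fT r V E T)"

lemma G_IE:
  assumes H: "uniform_hypergraph r V E" and Z: "Z \<subseteq> V" and col: "\<forall>v\<in>V. \<kappa> v < r"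
  shows "Gsum r V E \<kappa> Z = (\<Sum>J\<in>Pow {..<r}. (-1)^card ({..<r} - J) * hg_disc_set r V E {z \<in> Z. \<kappa> z \<in> J})"
proof -
  have fV: "finite V" using H unfolding uniform_hypergraph_def by auto
  have fZ: "finite Z" using Z fV finite_subset by blast
  have fK: "finite (ksets r Z)" by (rule ksets_finite[OF fZ])
  have "Gsum r V E \<kappa> Z = (\<Sum>T\<in>ksets r Z. fT r V E T * of_bool (\<kappa> ` T = {..<r}))"
    unfolding Gsum_def using sum_mult_of_bool_eq[OF fK, of "fT r V E" "\<lambda>T. \<kappa> ` T = {..<r}"]
    by (simp add: Collect_conj_eq Int_commute)
  also have "\<dots> = (\<Sum>T\<in>ksets r Z. fT r V E T * (\<Sum>J\<in>Pow {..<r}. of_bool (\<kappa> ` T \<subseteq> J) * (-1::real)^card ({..<r} - J)))"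
  proof (intro sum.cong refl)
    fix T assume "T \<in> ksets r Z"
    then have "\<kappa> ` T \<subseteq> {..<r}" using Z col unfolding ksets_def by auto
    then show "fT r V E T * of_bool (\<kappa> ` T = {..<r}) = fT r V E T * (\<Sum>J\<in>Pow {..<r}. of_bool (\<kappa> ` T \<subseteq> J) * (-1::real)^card ({..<r} - J))"
      using IE_pow[of "{..<r}" "\<kappa> ` T"] by simp
  qed
  also have "\<dots> = (\<Sum>J\<in>Pow {..<r}. (-1)^card ({..<r} - J) * (\<Sum>T\<in>ksets r Z. fT r V E T * of_bool (\<kappa> ` T \<subseteq> J)))"
  proof -
    have "(\<Sum>T\<in>ksets r Z. fT r V E T * (\<Sum>J\<in>Pow {..<r}. of_bool (\<kappa> ` T \<subseteq> J) * (-1::real)^card ({..<r} - J)))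
      = (\<Sum>T\<in>ksets r Z. \<Sum>J\<in>Pow {..<r}. (-1)^card ({..<r} - J) * (fT r V E T * of_bool (\<kappa> ` T \<subseteq> J)))"
      by (simp only: sum_distrib_left mult_ac)
    also have "\<dots> = (\<Sum>J\<in>Pow {..<r}. \<Sum>T\<in>ksets r Z. (-1)^card ({..<r} - J) * (fT r V E T * of_bool (\<kappa> ` T \<subseteq> J)))"
      by (rule sum.swap)
    also have "\<dots> = (\<Sum>J\<in>Pow {..<r}. (-1)^card ({..<r} - J) * (\<Sum>T\<in>ksets r Z. fT r V E T * of_bool (\<kappa> ` T \<subseteq> J)))"
      by (simp only: sum_distrib_left)
    finally show ?thesis .
  qed
  also have "\<dots> = (\<Sum>J\<in>Pow {..<r}. (-1)^card ({..<r} - J) * hg_disc_set r V E {z \<in> Z. \<kappa> z \<in> J})"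
  proof (intro sum.cong refl)
    fix J
    have "ksets r Z \<inter> {T. \<kappa> ` T \<subseteq> J} = ksets r {z \<in> Z. \<kappa> z \<in> J}" unfolding ksets_def by auto
    moreover have "{z \<in> Z. \<kappa> z \<in> J} \<subseteq> V" using Z by auto
    ultimately have "(\<Sum>T\<in>ksets r Z. fT r V E T * of_bool (\<kappa> ` T \<subseteq> J)) = hg_disc_set r V E {z \<in> Z. \<kappa> z \<in> J}"
      using sum_mult_of_bool_eq[OF fK, of "fT r V E" "\<lambda>T. \<kappa> ` T \<subseteq> J"] disc_sum[OF H, of "{z \<in> Z. \<kappa> z \<in> J}"]
      by simp
    then show "(-1)^card ({..<r} - J) * (\<Sum>T\<in>ksets r Z. fT r V E T * of_bool (\<kappa> ` T \<subseteq> J)) = (-1)^card ({..<r} - J) * hg_disc_set r V E {z \<in> Z. \<kappa> z \<in> J}"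
      by simp
  qed
  finally show ?thesis .
qed

lemma G_bound:
  assumes H: "uniform_hypergraph r V E" and Z: "Z \<subseteq> V" and col: "\<forall>v\<in>V. \<kappa> v < r"
  shows "\<bar>Gsum r V E \<kappa> Z\<bar> \<le> 2^r * hg_disc r V E"
proof -
  have "\<bar>Gsum r V E \<kappa> Z\<bar> \<le> (\<Sum>J\<in>Pow {..<r}. \<bar>(-1)^card ({..<r} - J) * hg_disc_set r V E {z \<in> Z. \<kappa> z \<in> J}\<bar>)"
    unfolding G_IE[OF assms] by (rule sum_abs)
  also have "\<dots> \<le> (\<Sum>J\<in>Pow {..<r}. hg_disc r V E)"
  proof (rule sum_mono)
    fix J
    have "{z \<in> Z. \<kappa> z \<in> J} \<subseteq> V" using Z by auto
    then show "\<bar>(-1)^card ({..<r} - J) * hg_disc_set r V E {z \<in> Z. \<kappa> z \<in> J}\<bar> \<le> hg_disc r V E"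
      using disc_le[OF H] by (simp add: abs_mult)
  qed
  also have "\<dots> = 2^r * hg_disc r V E" by (simp add: card_Pow)
  finally show ?thesis .
qed


definition Acol :: "'a set \<Rightarrow> ('a \<Rightarrow> nat) \<Rightarrow> 'a set" where
  "Acol V \<kappa> = {v \<in> V. \<kappa> v \<noteq> 0}"

definition coef :: "nat \<Rightarrow> 'a set \<Rightarrow> 'a set set \<Rightarrow> ('a \<Rightarrow> nat) \<Rightarrow> 'a \<Rightarrow> 'a set \<Rightarrow> real" where
  "coef r V E \<kappa> v S = (if card S = r - 1 \<and> \<kappa> ` S = {1..<r} then fT r V E (insert v S) else 0)"

lemma pol_sub:
  assumes "finite A" "X \<subseteq> A"
  shows "pol A a X = (\<Sum>S\<in>Pow X. a S)"
proof -
  have "Pow A \<inter> {S. S \<subseteq> X} = Pow X" using assms by auto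
  then show ?thesis unfolding pol_def using sum_mult_of_bool_eq[of "Pow A" a "\<lambda>S. S \<subseteq> X"] assms by simp
qed

lemma G_decomp:
  assumes H: "uniform_hypergraph r V E" and r: "1 \<le> r"
    and X: "X \<subseteq> Acol V \<kappa>" and W: "W \<subseteq> {v \<in> V. \<kappa> v = 0}"
  shows "Gsum r V E \<kappa> (X \<union> W) = (\<Sum>v\<in>W. pol (Acol V \<kappa>) (coef r V E \<kappa> v) X)"
proof -
  have fV: "finite V" using H unfolding uniform_hypergraph_def by auto
  have fA: "finite (Acol V \<kappa>)" using fV unfolding Acol_def by auto
  have fX: "finite X" using X fA finite_subset by blast
  have "W \<subseteq> V" using W by auto
  then have fW: "finite W" using fV finite_subset by blast
  define Good where "Good = {S. S \<subseteq> X \<and> card S = r - 1 \<and> \<kappa> ` S = {1..<r}}"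
  have fG: "finite Good" unfolding Good_def by (rule finite_subset[of _ "Pow X"]) (use fX in auto)
  have "\<And>v. pol (Acol V \<kappa>) (coef r V E \<kappa> v) X = (\<Sum>S\<in>Good. fT r V E (insert v S))"
  proof -
    fix v
    have "pol (Acol V \<kappa>) (coef r V E \<kappa> v) X = (\<Sum>S\<in>Pow X. coef r V E \<kappa> v S)"
      by (rule pol_sub[OF fA X])
    also have "\<dots> = (\<Sum>S\<in>{S \<in> Pow X. card S = r - 1 \<and> \<kappa> ` S = {1..<r}}. fT r V E (insert v S))"
      unfolding coef_def by (rule sum.inter_filter[symmetric]) (use fX in simp)
    also have "{S \<in> Pow X. card S = r - 1 \<and> \<kappa> ` S = {1..<r}} = Good" unfolding Good_def by auto
    finally show "pol (Acol V \<kappa>) (coef r V E \<kappa> v) X = (\<Sum>S\<in>Good. fT r V E (insert v S))" .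
  qed
  then have "(\<Sum>v\<in>W. pol (Acol V \<kappa>) (coef r V E \<kappa> v) X) = (\<Sum>v\<in>W. \<Sum>S\<in>Good. fT r V E (insert v S))"
    by simp
  also have "\<dots> = (\<Sum>(v, S)\<in>W \<times> Good. fT r V E (insert v S))"
    by (rule sum.cartesian_product)
  also have "\<dots> = (\<Sum>T\<in>(\<lambda>(v, S). insert v S) ` (W \<times> Good). fT r V E T)"
  proof -
    have "inj_on (\<lambda>(v, S). insert v S) (W \<times> Good)"
    proof (rule inj_onI, clarify)
      fix v S v' S' assume a: "v \<in> W" "S \<in> Good" "v' \<in> W" "S' \<in> Good" "insert v S = insert v' S'"
      have nS: "\<And>u Q. u \<in> W \<Longrightarrow> Q \<in> Good \<Longrightarrow> u \<notin> Q"
      proof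
        fix u Q assume "u \<in> W" "Q \<in> Good" "u \<in> Q"
        then have "\<kappa> u = 0" "\<kappa> u \<in> {1..<r}" using W unfolding Good_def by auto
        then show False by simp
      qed
      have "v = v'"
      proof (rule ccontr)
        assume "v \<noteq> v'"
        then have "v \<in> S'" using a(5) by blast
        then show False using nS[OF a(1) a(4)] by simp
      qed
      moreover have "S = S'"
        using a(5) nS[OF a(1) a(2)] nS[OF a(3) a(4)] \<open>v = v'\<close> by (metis Diff_insert_absorb)
      ultimately show "v = v' \<and> S = S'" by simp
    qed
    then have "sum (fT r V E) ((\<lambda>(v, S). insert v S) ` (W \<times> Good)) = sum (fT r V E \<circ> (\<lambda>(v, S). insert v S)) (W \<times> Good)"
      by (rule sum.reindex)
    moreover have "sum (fT r V E \<circ> (\<lambda>(v, S). insert v S)) (W \<times> Good) = (\<Sum>(v, S)\<in>W \<times> Good. fT r V E (insert v S))"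
      by (intro sum.cong) auto
    ultimately show ?thesis by simp
  qed
  also have "(\<lambda>(v, S). insert v S) ` (W \<times> Good) = {T \<in> ksets r (X \<union> W). \<kappa> ` T = {..<r}}"
  proof (rule set_eqI, rule iffI)
    fix T assume "T \<in> (\<lambda>(v, S). insert v S) ` (W \<times> Good)"
    then obtain v S where vS: "v \<in> W" "S \<in> Good" "T = insert v S" by auto
    have fS: "finite S" using vS(2) fX unfolding Good_def by (auto intro: finite_subset)
    have vn: "v \<notin> S" using vS W unfolding Good_def by force
    have "card T = r" using vS fS vn r unfolding Good_def by simp
    moreover have "T \<subseteq> X \<union> W" using vS unfolding Good_def by auto
    moreover have "\<kappa> ` T = {..<r}"
    proof -
      have "\<kappa> ` T = insert 0 {1..<r}" using vS W unfolding Good_def by auto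
      also have "\<dots> = {..<r}" using r by auto
      finally show ?thesis .
    qed
    ultimately show "T \<in> {T \<in> ksets r (X \<union> W). \<kappa> ` T = {..<r}}" unfolding ksets_def by auto
  next
    fix T assume T: "T \<in> {T \<in> ksets r (X \<union> W). \<kappa> ` T = {..<r}}"
    then have Tsub: "T \<subseteq> X \<union> W" and cT: "card T = r" and kT: "\<kappa> ` T = {..<r}" unfolding ksets_def by auto
    have fT': "finite T" using Tsub fX fW finite_subset by blast
    have inj: "inj_on \<kappa> T"
      using kT cT fT' by (simp add: inj_on_iff_eq_card)
    have "0 \<in> \<kappa> ` T" using kT r by auto
    then obtain v where v: "v \<in> T" "\<kappa> v = 0" by auto
    have vW: "v \<in> W" using v Tsub X unfolding Acol_def by auto
    define S where "S = T - {v}"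
    have "S \<subseteq> X"
    proof
      fix u assume u: "u \<in> S"
      then have "u \<in> T" "u \<noteq> v" unfolding S_def by auto
      moreover have "u \<in> W \<Longrightarrow> False"
      proof -
        assume "u \<in> W"
        then have "\<kappa> u = \<kappa> v" using W v by auto
        then show False using inj \<open>u \<in> T\<close> v(1) \<open>u \<noteq> v\<close> by (meson inj_onD)
      qed
      ultimately show "u \<in> X" using Tsub by auto
    qed
    moreover have "card S = r - 1" unfolding S_def using cT v fT' by simp
    moreover have "\<kappa> ` S = {1..<r}"
    proof -
      have "\<kappa> ` S = \<kappa> ` T - {\<kappa> v}" unfolding S_def using inj v(1) by (simp add: inj_on_image_set_diff)
      then show ?thesis using kT v by auto
    qed
    ultimately have "S \<in> Good" unfolding Good_def by auto
    moreover have "T = insert v S" unfolding S_def using v by auto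
    ultimately show "T \<in> (\<lambda>(v, S). insert v S) ` (W \<times> Good)" using vW by auto
  qed
  finally show ?thesis unfolding Gsum_def by simp
qed


lemma sumabs_bound:
  assumes H: "uniform_hypergraph r V E" and r: "1 \<le> r" and col: "\<forall>v\<in>V. \<kappa> v < r"
    and X: "X \<subseteq> Acol V \<kappa>"
  shows "(\<Sum>v\<in>{v \<in> V. \<kappa> v = 0}. \<bar>pol (Acol V \<kappa>) (coef r V E \<kappa> v) X\<bar>) \<le> 2 * 2^r * hg_disc r V E"
proof -
  define B0 where "B0 = {v \<in> V. \<kappa> v = 0}"
  define L where "L = (\<lambda>v. pol (Acol V \<kappa>) (coef r V E \<kappa> v) X)"
  have fV: "finite V" using H unfolding uniform_hypergraph_def by auto
  have fB: "finite B0" unfolding B0_def using fV by auto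
  have "(\<Sum>v\<in>B0. \<bar>L v\<bar>) = (\<Sum>v\<in>B0. if 0 \<le> L v then L v else - L v)"
    by (intro sum.cong) auto
  also have "\<dots> = (\<Sum>v\<in>B0 \<inter> {v. 0 \<le> L v}. L v) + (\<Sum>v\<in>B0 \<inter> - {v. 0 \<le> L v}. - L v)"
    by (rule sum.If_cases[OF fB])
  also have "\<dots> = Gsum r V E \<kappa> (X \<union> (B0 \<inter> {v. 0 \<le> L v})) - Gsum r V E \<kappa> (X \<union> (B0 \<inter> - {v. 0 \<le> L v}))"
    unfolding L_def
    by (subst G_decomp[OF H r X], (auto simp: B0_def)[1])+ (simp add: sum_negf)
  also have "\<dots> \<le> \<bar>Gsum r V E \<kappa> (X \<union> (B0 \<inter> {v. 0 \<le> L v}))\<bar> + \<bar>Gsum r V E \<kappa> (X \<union> (B0 \<inter> - {v. 0 \<le> L v}))\<bar>"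
    by linarith
  also have "\<dots> \<le> 2^r * hg_disc r V E + 2^r * hg_disc r V E"
  proof -
    have "X \<subseteq> V" using X unfolding Acol_def by auto
    then have "X \<union> (B0 \<inter> {v. 0 \<le> L v}) \<subseteq> V" "X \<union> (B0 \<inter> - {v. 0 \<le> L v}) \<subseteq> V" unfolding B0_def by auto
    then show ?thesis using G_bound[OF H _ col] by (meson add_mono)
  qed
  finally show ?thesis unfolding B0_def L_def by (simp add: mult_ac)
qed

lemma avg_sumabs_bound:
  assumes H: "uniform_hypergraph r V E" and r: "1 \<le> r" and col: "\<forall>v\<in>V. \<kappa> v < r"
  shows "(\<Sum>v\<in>{v \<in> V. \<kappa> v = 0}. avg (Acol V \<kappa>) (\<lambda>X. \<bar>pol (Acol V \<kappa>) (coef r V E \<kappa> v) X\<bar>)) \<le> 2 * 2^r * hg_disc r V E"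
proof -
  have fV: "finite V" using H unfolding uniform_hypergraph_def by auto
  have fB: "finite {v \<in> V. \<kappa> v = 0}" using fV by auto
  have fA: "finite (Acol V \<kappa>)" using fV unfolding Acol_def by auto
  have "(\<Sum>v\<in>{v \<in> V. \<kappa> v = 0}. avg (Acol V \<kappa>) (\<lambda>X. \<bar>pol (Acol V \<kappa>) (coef r V E \<kappa> v) X\<bar>))
     = avg (Acol V \<kappa>) (\<lambda>X. \<Sum>v\<in>{v \<in> V. \<kappa> v = 0}. \<bar>pol (Acol V \<kappa>) (coef r V E \<kappa> v) X\<bar>)"
    by (rule avg_sum[OF fB, symmetric])
  also have "\<dots> \<le> 2 * 2^r * hg_disc r V E"
    by (rule avg_le[OF fA]) (rule sumabs_bound[OF H r col])
  finally show ?thesis .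
qed

definition degk :: "nat \<Rightarrow> 'a set \<Rightarrow> 'a set set \<Rightarrow> ('a \<Rightarrow> nat) \<Rightarrow> 'a \<Rightarrow> nat" where
  "degk r V E \<kappa> v = card {S \<in> Pow (Acol V \<kappa>). card S = r - 1 \<and> \<kappa> ` S = {1..<r} \<and> insert v S \<in> E}"

lemma per_v_lower:
  assumes H: "uniform_hypergraph r V E" and r: "1 \<le> r"
    and p: "hg_density r V E \<le> 1/2"
  shows "(1/3)^(r-1) * (1/2)^r * sqrt (real (degk r V E \<kappa> v)) \<le> avg (Acol V \<kappa>) (\<lambda>X. \<bar>pol (Acol V \<kappa>) (coef r V E \<kappa> v) X\<bar>)"
proof -
  define A where "A = Acol V \<kappa>"
  define a where "a = coef r V E \<kappa> v"
  have fV: "finite V" using H unfolding uniform_hypergraph_def by auto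
  have fA: "finite A" using fV unfolding A_def Acol_def by auto
  have dg: "degle A (r - 1) a" unfolding degle_def a_def coef_def by auto
  define Good where "Good = {S \<in> Pow A. card S = r - 1 \<and> \<kappa> ` S = {1..<r} \<and> insert v S \<in> E}"
  have "(1/4) * real (card Good) \<le> (\<Sum>S\<in>Pow A. if card S = r - 1 then (a S)^2 else 0)"
  proof -
    have "(1/4) * real (card Good) = (\<Sum>S\<in>Good. 1/4)" by simp
    also have "\<dots> \<le> (\<Sum>S\<in>Good. if card S = r - 1 then (a S)^2 else 0)"
    proof (rule sum_mono)
      fix S assume "S \<in> Good"
      then have "card S = r - 1" "a S = 1 - hg_density r V E"
        unfolding Good_def a_def coef_def fT_def by auto
      moreover have "(1/4::real) \<le> (1 - hg_density r V E)^2"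
      proof -
        have "1/2 \<le> 1 - hg_density r V E" using p by simp
        then have "(1/2)^2 \<le> (1 - hg_density r V E)^2" by (rule power_mono) simp
        then show ?thesis by (simp add: power2_eq_square)
      qed
      ultimately show "1/4 \<le> (if card S = r - 1 then (a S)^2 else 0)" by simp
    qed
    also have "\<dots> \<le> (\<Sum>S\<in>Pow A. if card S = r - 1 then (a S)^2 else 0)"
      by (rule sum_mono2) (use fA in \<open>auto simp: Good_def\<close>)
    finally show ?thesis .
  qed
  then have "(1/4)^(r-1) * ((1/4) * real (card Good)) \<le> avg A (\<lambda>X. (pol A a X)^2)"
    using top_weight[OF fA dg] by (meson mult_left_mono order_trans zero_le_divide_1_iff zero_le_numeral zero_le_power)
  moreover have "((1/2)^r * sqrt (real (card Good)))^2 = (1/4)^(r-1) * ((1/4) * real (card Good))"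
  proof -
    have "((1/2::real)^r)^2 = (1/4)^(r-1) * (1/4)"
    proof -
      have "((1/2::real)^r)^2 = ((1/2)^2)^r" by (simp add: power_mult[symmetric] mult.commute)
      also have "\<dots> = (1/4)^r" by (simp add: power2_eq_square)
      also have "\<dots> = (1/4)^(Suc (r-1))" using r by simp
      finally show ?thesis by simp
    qed
    then show ?thesis by (simp add: power_mult_distrib)
  qed
  ultimately have "(1/2)^r * sqrt (real (card Good)) \<le> sqrt (avg A (\<lambda>X. (pol A a X)^2))"
    by (intro real_le_rsqrt) simp
  then have "(1/3)^(r-1) * ((1/2)^r * sqrt (real (card Good))) \<le> (1/3)^(r-1) * sqrt (avg A (\<lambda>X. (pol A a X)^2))"
    by (rule mult_left_mono) simp
  also have "\<dots> \<le> avg A (\<lambda>X. \<bar>pol A a X\<bar>)" by (rule avg_abs_lower[OF fA dg])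
  finally show ?thesis unfolding A_def a_def Good_def degk_def by (simp add: mult_ac)
qed

definition gk :: "nat \<Rightarrow> 'a set set \<Rightarrow> ('a \<Rightarrow> nat) \<Rightarrow> 'a \<Rightarrow> nat" where
  "gk r E \<kappa> v = card {e \<in> E. v \<in> e \<and> \<kappa> ` (e - {v}) = {1..<r}}"

lemma degk_le_deg:
  assumes H: "uniform_hypergraph r V E" and k0: "\<kappa> v = 0"
  shows "degk r V E \<kappa> v \<le> deg E v"
proof -
  have fV: "finite V" using H unfolding uniform_hypergraph_def by auto
  have fE: "finite E" using H fV unfolding uniform_hypergraph_def
    by (metis PowI finite_Pow_iff finite_subset subsetI)
  define G where "G = {S \<in> Pow (Acol V \<kappa>). card S = r - 1 \<and> \<kappa> ` S = {1..<r} \<and> insert v S \<in> E}"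
  have vn: "\<And>S. S \<in> G \<Longrightarrow> v \<notin> S" using k0 unfolding G_def Acol_def by auto
  have inj: "inj_on (insert v) G"
  proof (rule inj_onI)
    fix S S' assume "S \<in> G" "S' \<in> G" "insert v S = insert v S'"
    then show "S = S'" using vn by (metis Diff_insert_absorb)
  qed
  have sub: "insert v ` G \<subseteq> {e \<in> E. v \<in> e}" unfolding G_def by auto
  have "degk r V E \<kappa> v = card (insert v ` G)" unfolding degk_def G_def[symmetric] by (rule card_image[OF inj, symmetric])
  also have "\<dots> \<le> deg E v" unfolding deg_def by (rule card_mono) (use fE sub in auto)
  finally show ?thesis .
qed

lemma gk_le_degk:
  assumes H: "uniform_hypergraph r V E" and r: "1 \<le> r" and k0: "\<kappa> v = 0"
  shows "gk r E \<kappa> v \<le> degk r V E \<kappa> v"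
proof -
  have fV: "finite V" using H unfolding uniform_hypergraph_def by auto
  have fA: "finite (Acol V \<kappa>)" using fV unfolding Acol_def by auto
  define G where "G = {S \<in> Pow (Acol V \<kappa>). card S = r - 1 \<and> \<kappa> ` S = {1..<r} \<and> insert v S \<in> E}"
  define F where "F = {e \<in> E. v \<in> e \<and> \<kappa> ` (e - {v}) = {1..<r}}"
  have inj: "inj_on (\<lambda>e. e - {v}) F"
  proof (rule inj_onI)
    fix e e' assume "e \<in> F" "e' \<in> F" "e - {v} = e' - {v}"
    then show "e = e'" unfolding F_def by (metis insert_Diff mem_Collect_eq)
  qed
  have sub: "(\<lambda>e. e - {v}) ` F \<subseteq> G"
  proof
    fix S assume "S \<in> (\<lambda>e. e - {v}) ` F"
    then obtain e where e: "e \<in> E" "v \<in> e" "\<kappa> ` (e - {v}) = {1..<r}" "S = e - {v}" unfolding F_def by auto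
    have eV: "e \<subseteq> V" "card e = r" using H e(1) unfolding uniform_hypergraph_def by auto
    have fe: "finite e" using eV fV finite_subset by blast
    have "S \<subseteq> Acol V \<kappa>"
    proof
      fix u assume "u \<in> S"
      then have "u \<in> V" "\<kappa> u \<in> {1..<r}" using e eV by auto
      then show "u \<in> Acol V \<kappa>" unfolding Acol_def by auto
    qed
    moreover have "card S = r - 1" using e eV fe by simp
    moreover have "insert v S = e" using e by auto
    ultimately show "S \<in> G" unfolding G_def using e by auto
  qed
  have fG: "finite G" unfolding G_def using fA by auto
  have "gk r E \<kappa> v = card ((\<lambda>e. e - {v}) ` F)" unfolding gk_def F_def[symmetric] by (rule card_image[OF inj, symmetric])
  also have "\<dots> \<le> card G" by (rule card_mono[OF fG sub])
  finally show ?thesis unfolding degk_def G_def .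
qed

lemma kappa_bound:
  assumes H: "uniform_hypergraph r V E" and r: "1 \<le> r" and p: "hg_density r V E \<le> 1/2"
    and col: "\<forall>v\<in>V. \<kappa> v < r" and M: "0 < M" and Sh: "\<forall>v\<in>V - Sh. real (deg E v) \<le> M"
  shows "(1/3)^(r-1) * (1/2)^r / sqrt M * (\<Sum>v\<in>V - Sh. of_bool (\<kappa> v = 0) * real (gk r E \<kappa> v)) \<le> 2 * 2^r * hg_disc r V E"
proof -
  define c1 where "c1 = (1/3::real)^(r-1) * (1/2)^r"
  have c1: "0 < c1" unfolding c1_def by simp
  have fV: "finite V" using H unfolding uniform_hypergraph_def by auto
  define B0 where "B0 = {v \<in> V. \<kappa> v = 0}"
  have fB: "finite B0" unfolding B0_def using fV by auto
  have "(\<Sum>v\<in>V - Sh. of_bool (\<kappa> v = 0) * real (gk r E \<kappa> v)) \<le> (\<Sum>v\<in>V - Sh. sqrt M * (of_bool (\<kappa> v = 0) * sqrt (real (degk r V E \<kappa> v))))"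
  proof (rule sum_mono)
    fix v assume v: "v \<in> V - Sh"
    show "of_bool (\<kappa> v = 0) * real (gk r E \<kappa> v) \<le> sqrt M * (of_bool (\<kappa> v = 0) * sqrt (real (degk r V E \<kappa> v)))"
    proof (cases "\<kappa> v = 0")
      case True
      define x where "x = real (degk r V E \<kappa> v)"
      have x0: "0 \<le> x" unfolding x_def by simp
      have "real (gk r E \<kappa> v) \<le> x" unfolding x_def using gk_le_degk[OF H r, of \<kappa> v] True by simp
      moreover have xM: "x \<le> M" unfolding x_def using degk_le_deg[OF H, of \<kappa> v] True Sh v by (meson of_nat_le_iff order_trans)
      moreover have "x \<le> sqrt M * sqrt x"
      proof -
        have "sqrt x * sqrt x \<le> sqrt M * sqrt x" using xM x0 by (intro mult_right_mono) auto
        then show ?thesis using x0 by simp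
      qed
      ultimately show ?thesis using True unfolding x_def by simp
    qed simp
  qed
  also have "\<dots> = sqrt M * (\<Sum>v\<in>V - Sh. of_bool (\<kappa> v = 0) * sqrt (real (degk r V E \<kappa> v)))"
    by (simp add: sum_distrib_left)
  also have "(\<Sum>v\<in>V - Sh. of_bool (\<kappa> v = 0) * sqrt (real (degk r V E \<kappa> v))) \<le> (\<Sum>v\<in>B0. sqrt (real (degk r V E \<kappa> v)))"
  proof -
    have "(\<Sum>v\<in>V - Sh. of_bool (\<kappa> v = 0) * sqrt (real (degk r V E \<kappa> v))) = (\<Sum>v\<in>(V - Sh) \<inter> {v. \<kappa> v = 0}. sqrt (real (degk r V E \<kappa> v)))"
      using fV by simp
    also have "\<dots> \<le> (\<Sum>v\<in>B0. sqrt (real (degk r V E \<kappa> v)))"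
      by (rule sum_mono2[OF fB]) (auto simp: B0_def)
    finally show ?thesis .
  qed
  finally have s1: "(\<Sum>v\<in>V - Sh. of_bool (\<kappa> v = 0) * real (gk r E \<kappa> v)) \<le> sqrt M * (\<Sum>v\<in>B0. sqrt (real (degk r V E \<kappa> v)))"
    using M by (simp add: mult_left_mono)
  have "c1 * (\<Sum>v\<in>B0. sqrt (real (degk r V E \<kappa> v))) \<le> (\<Sum>v\<in>B0. avg (Acol V \<kappa>) (\<lambda>X. \<bar>pol (Acol V \<kappa>) (coef r V E \<kappa> v) X\<bar>))"
    unfolding sum_distrib_left c1_def by (rule sum_mono) (rule per_v_lower[OF H r p])
  also have "\<dots> \<le> 2 * 2^r * hg_disc r V E" unfolding B0_def by (rule avg_sumabs_bound[OF H r col])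
  finally have s2: "c1 * (\<Sum>v\<in>B0. sqrt (real (degk r V E \<kappa> v))) \<le> 2 * 2^r * hg_disc r V E" .
  have "c1 / sqrt M * (\<Sum>v\<in>V - Sh. of_bool (\<kappa> v = 0) * real (gk r E \<kappa> v)) \<le> c1 / sqrt M * (sqrt M * (\<Sum>v\<in>B0. sqrt (real (degk r V E \<kappa> v))))"
    using s1 c1 M by (intro mult_left_mono) auto
  also have "\<dots> = c1 * (\<Sum>v\<in>B0. sqrt (real (degk r V E \<kappa> v)))" using M by simp
  finally show ?thesis using s2 unfolding c1_def by linarith
qed

lemma count_colourings:
  assumes fV: "finite V" and e: "e \<subseteq> V" "card e = r" "v \<in> e" and r: "1 \<le> r"
  shows "r^(card V - r) \<le> card {\<kappa> \<in> PiE V (\<lambda>_. {..<r}). \<kappa> v = 0 \<and> \<kappa> ` (e - {v}) = {1..<r}}"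
proof -
  have fe: "finite e" using e fV finite_subset by blast
  have "card (e - {v}) = card {1..<r}" using e fe by simp
  then obtain \<beta> where \<beta>: "bij_betw \<beta> (e - {v}) {1..<r}"
    using bij_betw_iff_card[of "e - {v}" "{1..<r}"] fe by auto
  define \<sigma> where "\<sigma> = (\<lambda>x. if x = v then 0 else \<beta> x)"
  define \<Phi> where "\<Phi> = (\<lambda>\<rho> x. if x \<in> e then \<sigma> x else \<rho> x)"
  define T where "T = {\<kappa> \<in> PiE V (\<lambda>_. {..<r}). \<kappa> v = 0 \<and> \<kappa> ` (e - {v}) = {1..<r}}"
  have sub: "\<Phi> ` PiE (V - e) (\<lambda>_. {..<r}) \<subseteq> T"
  proof
    fix \<kappa> assume "\<kappa> \<in> \<Phi> ` PiE (V - e) (\<lambda>_. {..<r})"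
    then obtain \<rho> where \<rho>: "\<rho> \<in> PiE (V - e) (\<lambda>_. {..<r})" "\<kappa> = \<Phi> \<rho>" by auto
    have "\<kappa> \<in> PiE V (\<lambda>_. {..<r})"
    proof (rule PiE_I)
      fix x assume x: "x \<in> V"
      show "\<kappa> x \<in> {..<r}"
      proof (cases "x \<in> e")
        case True
        then show ?thesis using \<rho>(2) \<beta> r unfolding \<Phi>_def \<sigma>_def bij_betw_def by auto
      next
        case False
        then show ?thesis using \<rho> x unfolding \<Phi>_def by (auto simp: PiE_iff)
      qed
    next
      fix x assume x: "x \<notin> V"
      then have "x \<notin> e" "x \<notin> V - e" using e by auto
      then show "\<kappa> x = undefined" using \<rho> unfolding \<Phi>_def by (auto simp: PiE_iff extensional_def)
    qed
    moreover have "\<kappa> v = 0" using \<rho>(2) e unfolding \<Phi>_def \<sigma>_def by simp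
    moreover have "\<kappa> ` (e - {v}) = {1..<r}"
    proof -
      have "\<kappa> ` (e - {v}) = \<beta> ` (e - {v})" using \<rho>(2) unfolding \<Phi>_def \<sigma>_def by (intro image_cong) auto
      then show ?thesis using \<beta> unfolding bij_betw_def by simp
    qed
    ultimately show "\<kappa> \<in> T" unfolding T_def by auto
  qed
  have inj: "inj_on \<Phi> (PiE (V - e) (\<lambda>_. {..<r}))"
  proof (rule inj_onI)
    fix \<rho> \<rho>' assume a: "\<rho> \<in> PiE (V - e) (\<lambda>_. {..<r})" "\<rho>' \<in> PiE (V - e) (\<lambda>_. {..<r})" "\<Phi> \<rho> = \<Phi> \<rho>'"
    show "\<rho> = \<rho>'"
    proof
      fix x
      show "\<rho> x = \<rho>' x"
      proof (cases "x \<in> e")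
        case True
        then have "x \<notin> V - e" by auto
        then show ?thesis using a(1,2) by (auto simp: PiE_iff extensional_def)
      next
        case False
        then show ?thesis using fun_cong[OF a(3), of x] unfolding \<Phi>_def by simp
      qed
    qed
  qed
  have "finite (PiE V (\<lambda>_. {..<r}))" using fV by (intro finite_PiE) auto
  then have fT: "finite T" unfolding T_def by (rule finite_subset[rotated]) auto
  have "card (PiE (V - e) (\<lambda>_. {..<r})) = r^card (V - e)" using fV by (simp add: card_PiE)
  also have "card (V - e) = card V - r" using e fe by (simp add: card_Diff_subset)
  finally have "r^(card V - r) = card (\<Phi> ` PiE (V - e) (\<lambda>_. {..<r}))" using card_image[OF inj] by simp
  also have "\<dots> \<le> card T" by (rule card_mono[OF fT sub])
  finally show ?thesis unfolding T_def .
qed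

lemma colour_sum:
  assumes H: "uniform_hypergraph r V E" and r: "1 \<le> r" and v: "v \<in> V"
  shows "real (r^(card V - r)) * real (deg E v) \<le> (\<Sum>\<kappa>\<in>PiE V (\<lambda>_. {..<r}). of_bool (\<kappa> v = 0) * real (gk r E \<kappa> v))"
proof -
  have fV: "finite V" using H unfolding uniform_hypergraph_def by auto
  have fE: "finite E" using H fV unfolding uniform_hypergraph_def
    by (metis PowI finite_Pow_iff finite_subset subsetI)
  define Ev where "Ev = {e \<in> E. v \<in> e}"
  have fEv: "finite Ev" unfolding Ev_def using fE by auto
  define K where "K = PiE V (\<lambda>_. {..<r}::nat set)"
  have fK: "finite K" unfolding K_def using fV by (intro finite_PiE) auto
  have "\<And>\<kappa>. of_bool (\<kappa> v = 0) * real (gk r E \<kappa> v) = (\<Sum>e\<in>Ev. of_bool (\<kappa> v = 0 \<and> \<kappa> ` (e - {v}) = {1..<r}))"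
  proof -
    fix \<kappa>
    have eq: "{e \<in> E. v \<in> e \<and> \<kappa> ` (e - {v}) = {1..<r}} = Ev \<inter> {e. \<kappa> ` (e - {v}) = {1..<r}}" unfolding Ev_def by auto
    have "(\<Sum>e\<in>Ev. of_bool (\<kappa> ` (e - {v}) = {1..<r})) = real (card (Ev \<inter> {e. \<kappa> ` (e - {v}) = {1..<r}}))"
      by (rule sum_of_bool_eq[OF fEv fEv])
    then have "real (gk r E \<kappa> v) = (\<Sum>e\<in>Ev. of_bool (\<kappa> ` (e - {v}) = {1..<r}))"
      unfolding gk_def eq by simp
    then show "of_bool (\<kappa> v = 0) * real (gk r E \<kappa> v) = (\<Sum>e\<in>Ev. of_bool (\<kappa> v = 0 \<and> \<kappa> ` (e - {v}) = {1..<r}))"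
      by (simp add: sum_distrib_left)
  qed
  then have "(\<Sum>\<kappa>\<in>K. of_bool (\<kappa> v = 0) * real (gk r E \<kappa> v)) = (\<Sum>\<kappa>\<in>K. \<Sum>e\<in>Ev. of_bool (\<kappa> v = 0 \<and> \<kappa> ` (e - {v}) = {1..<r}))"
    by simp
  also have "\<dots> = (\<Sum>e\<in>Ev. \<Sum>\<kappa>\<in>K. of_bool (\<kappa> v = 0 \<and> \<kappa> ` (e - {v}) = {1..<r}))" by (rule sum.swap)
  also have "\<dots> = (\<Sum>e\<in>Ev. real (card {\<kappa> \<in> K. \<kappa> v = 0 \<and> \<kappa> ` (e - {v}) = {1..<r}}))"
  proof (intro sum.cong refl)
    fix e
    have eq: "{\<kappa> \<in> K. \<kappa> v = 0 \<and> \<kappa> ` (e - {v}) = {1..<r}} = K \<inter> {\<kappa>. \<kappa> v = 0 \<and> \<kappa> ` (e - {v}) = {1..<r}}" by auto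
    show "(\<Sum>\<kappa>\<in>K. of_bool (\<kappa> v = 0 \<and> \<kappa> ` (e - {v}) = {1..<r})) = real (card {\<kappa> \<in> K. \<kappa> v = 0 \<and> \<kappa> ` (e - {v}) = {1..<r}})"
      unfolding eq by (rule sum_of_bool_eq[OF fK fK])
  qed
  also have "\<dots> \<ge> (\<Sum>e\<in>Ev. real (r^(card V - r)))"
  proof (rule sum_mono)
    fix e assume "e \<in> Ev"
    then have "e \<subseteq> V" "card e = r" "v \<in> e" using H unfolding Ev_def uniform_hypergraph_def by auto
    then show "real (r^(card V - r)) \<le> real (card {\<kappa> \<in> K. \<kappa> v = 0 \<and> \<kappa> ` (e - {v}) = {1..<r}})"
      unfolding K_def using count_colourings[OF fV _ _ _ r] by (simp only: of_nat_le_iff)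
  qed
  also have "(\<Sum>e\<in>Ev. real (r^(card V - r))) = real (r^(card V - r)) * real (deg E v)"
    unfolding deg_def Ev_def by simp
  finally show ?thesis unfolding K_def by simp
qed

lemma main_bound:
  assumes H: "uniform_hypergraph r V E" and r2: "2 \<le> r"
    and d1: "1 \<le> hg_avg_degree r V E"
    and d2: "hg_avg_degree r V E \<le> real (card V - 1 choose (r - 1)) / 2"
  shows "(1/3)^(r-1) * (1/2)^r / (4^(r+2) * real r^r) * sqrt (hg_avg_degree r V E) * real (card V) \<le> hg_disc r V E"
proof -
  define n where "n = card V"
  define m where "m = card E"
  define p where "p = hg_density r V E"
  define d where "d = hg_avg_degree r V E"
  define D where "D = hg_disc r V E"
  define c1 where "c1 = (1/3::real)^(r-1) * (1/2)^r"
  have r1: "1 \<le> r" using r2 by simp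
  have c1: "0 < c1" unfolding c1_def by simp
  have fV: "finite V" using H unfolding uniform_hypergraph_def by auto
  have Ek: "E \<subseteq> ksets r V" using H unfolding uniform_hypergraph_def ksets_def by auto
  have fE: "finite E" using Ek ksets_finite[OF fV] finite_subset by blast
  have dd: "d = real r * real m / real n" unfolding d_def m_def n_def hg_avg_degree_def by simp
  have dpos: "1 \<le> d" using d1 unfolding d_def .
  have n0: "0 < n" using dpos dd by (cases "n = 0") auto
  have m0: "0 < m" using dpos dd by (cases "m = 0") auto
  obtain e0 where e0: "e0 \<in> E" using m0 unfolding m_def by (metis card.empty ex_in_conv less_irrefl)
  have rn: "r \<le> n" using e0 H fV unfolding uniform_hypergraph_def n_def by (metis card_mono)
  have Cpos: "0 < n choose r" using rn by simp
  have binom: "r * (n choose r) = n * ((n - 1) choose (r - 1))" using r1 by (simp add: times_binomial_minus1_eq)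
  have pp: "p = real m / real (n choose r)" unfolding p_def m_def n_def hg_density_def by simp
  have pC: "p * real (n choose r) = real m" using pp Cpos by simp
  have pd: "p * real ((n - 1) choose (r - 1)) = d"
  proof -
    have "real r * real (n choose r) = real n * real ((n - 1) choose (r - 1))"
      using binom by (metis of_nat_mult)
    then have "real ((n - 1) choose (r - 1)) = real r * real (n choose r) / real n" using n0 by (simp add: field_simps)
    then show ?thesis unfolding pp dd using Cpos by (simp add: field_simps)
  qed
  have C1pos: "0 < real ((n - 1) choose (r - 1))" using d2 dpos unfolding d_def n_def by linarith
  have p0: "0 \<le> p" unfolding pp by simp
  have ph: "p \<le> 1/2"
  proof -
    have "p * real ((n - 1) choose (r - 1)) \<le> (1/2) * real ((n - 1) choose (r - 1))"
      using pd d2 unfolding d_def n_def by simp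
    then show ?thesis using C1pos by (rule mult_right_le_imp_le)
  qed
  have degsum: "(\<Sum>v\<in>V. real (deg E v)) = d * real n"
  proof -
    have "(\<Sum>v\<in>V. real (deg E v)) = (\<Sum>e\<in>E. real (card (e \<inter> V)))"
      unfolding deg_def by (rule double_count[OF fE fV])
    also have "\<dots> = (\<Sum>e\<in>E. real r)"
      using H unfolding uniform_hypergraph_def by (intro sum.cong refl) (simp add: Int_absorb2)
    also have "\<dots> = real r * real m" unfolding m_def by simp
    also have "\<dots> = d * real n" unfolding dd using n0 by simp
    finally show ?thesis .
  qed
  define K where "K = (2::real)^(r+2)"
  have K1: "1 \<le> K" unfolding K_def by (rule one_le_power) simp
  define M where "M = K * d"
  have M0: "0 < M" unfolding M_def using K1 dpos by simp
  define Sh where "Sh = {v \<in> V. M \<le> real (deg E v)}"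
  have ShV: "Sh \<subseteq> V" unfolding Sh_def by auto
  have fSh: "finite Sh" using ShV fV finite_subset by blast
  have sqd: "sqrt d \<le> d"
  proof -
    have s1: "1 \<le> sqrt d" using dpos by simp
    have "sqrt d * 1 \<le> sqrt d * sqrt d" using s1 by (intro mult_left_mono) auto
    also have "\<dots> = d" using dpos by simp
    finally show ?thesis by simp
  qed
  have goal_c: "(1/3)^(r-1) * (1/2)^r / (4^(r+2) * real r^r) = c1 / (4^(r+2) * real r^r)" unfolding c1_def by simp
  have rr: "1 \<le> real r ^ r" using r1 by simp
  show ?thesis
  proof (cases "d * real n / 2 \<le> (\<Sum>v\<in>Sh. real (deg E v))")
    case True
    have "real (card Sh) * M \<le> (\<Sum>v\<in>Sh. real (deg E v))"
      using sum_mono[of Sh "\<lambda>_. M" "\<lambda>v. real (deg E v)"] unfolding Sh_def by (simp add: mult.commute)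
    also have "\<dots> \<le> (\<Sum>v\<in>V. real (deg E v))" by (rule sum_mono2[OF fV ShV]) auto
    finally have cS: "real (card Sh) * M \<le> d * real n" using degsum by simp
    have cSd: "real (card Sh) * d \<le> d * real n / K"
      using cS K1 unfolding M_def by (simp add: field_simps)
    have "avg (V - Sh) (\<lambda>R. hg_disc_set r V E (Sh \<union> R)) \<le> D"
      unfolding D_def
    proof (rule avg_le)
      show "finite (V - Sh)" using fV by simp
      fix R assume "R \<subseteq> V - Sh"
      then have "Sh \<union> R \<subseteq> V" using ShV by auto
      then show "hg_disc_set r V E (Sh \<union> R) \<le> hg_disc r V E" using disc_le[OF H] by (meson abs_ge_self order_trans)
    qed
    then have "(1/2)^r * (\<Sum>e\<in>E. real (card (e \<inter> Sh))) - p * (\<Sum>T\<in>ksets r V. real (card (T \<inter> Sh))) \<le> D"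
      using caseA_avg[OF H ShV] caseA_bound[OF H ShV] pC p0 unfolding p_def n_def m_def by simp
    moreover have "(\<Sum>e\<in>E. real (card (e \<inter> Sh))) = (\<Sum>v\<in>Sh. real (deg E v))"
      unfolding deg_def by (rule double_count[OF fE fSh, symmetric])
    moreover have "p * (\<Sum>T\<in>ksets r V. real (card (T \<inter> Sh))) \<le> real (card Sh) * d"
    proof -
      have "(\<Sum>T\<in>ksets r V. real (card (T \<inter> Sh))) = (\<Sum>v\<in>Sh. real (card {T \<in> ksets r V. v \<in> T}))"
        by (rule double_count[OF ksets_finite[OF fV] fSh, symmetric])
      also have "\<dots> \<le> (\<Sum>v\<in>Sh. real ((n - 1) choose (r - 1)))"
        by (rule sum_mono) (use count_containing[OF fV _ r1] ShV in \<open>auto simp: n_def\<close>)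
      also have "\<dots> = real (card Sh) * real ((n - 1) choose (r - 1))" by simp
      finally have "p * (\<Sum>T\<in>ksets r V. real (card (T \<inter> Sh))) \<le> p * (real (card Sh) * real ((n - 1) choose (r - 1)))"
        using p0 by (intro mult_left_mono)
      also have "\<dots> = real (card Sh) * d" using pd by (simp add: mult_ac)
      finally show ?thesis .
    qed
    moreover have "(1/2)^r * (d * real n / 2) \<le> (1/2)^r * (\<Sum>e\<in>E. real (card (e \<inter> Sh)))"
      using True double_count[OF fE fSh] unfolding deg_def by (intro mult_left_mono) auto
    ultimately have "(1/2)^r * (d * real n / 2) - d * real n / K \<le> D"
      using cSd by linarith
    moreover have "(1/2)^r * (d * real n / 2) - d * real n / K = d * real n / K"
      unfolding K_def by (simp add: field_simps power_add)
    ultimately have DA: "d * real n / K \<le> D" by simp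
    have "c1 / (4^(r+2) * real r^r) \<le> 1 / K"
    proof -
      have "c1 \<le> 1" unfolding c1_def by (simp add: power_le_one mult_le_one)
      moreover have "K \<le> 4^(r+2) * real r^r"
      proof -
        have "K \<le> 4^(r+2)" unfolding K_def by (rule power_mono) simp_all
        also have "\<dots> \<le> 4^(r+2) * real r^r" using rr by simp
        finally show ?thesis .
      qed
      moreover have Xp: "0 < 4^(r+2) * real r^r" using rr by (intro mult_pos_pos) auto
      ultimately have "c1 / (4^(r+2) * real r^r) \<le> 1 / (4^(r+2) * real r^r)"
        by (intro divide_right_mono) auto
      also have "\<dots> \<le> 1 / K"
      proof (rule divide_left_mono)
        show "K \<le> 4^(r+2) * real r^r" by fact
        show "0 < 4^(r+2) * real r^r * K" using Xp K1 by (intro mult_pos_pos) auto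
      qed simp
      finally show ?thesis .
    qed
    then have "c1 / (4^(r+2) * real r^r) * sqrt d \<le> 1 / K * d"
      using sqd c1 rr K1 dpos by (intro mult_mono) auto
    then have "c1 / (4^(r+2) * real r^r) * sqrt d * real n \<le> 1 / K * d * real n"
      by (rule mult_right_mono) simp
    also have "\<dots> \<le> D" using DA by simp
    finally show ?thesis unfolding goal_c d_def D_def n_def .
  next
    case False
    have Vs: "(\<Sum>v\<in>V. real (deg E v)) = (\<Sum>v\<in>Sh. real (deg E v)) + (\<Sum>v\<in>V - Sh. real (deg E v))"
      using sum.subset_diff[OF ShV fV, of "\<lambda>v. real (deg E v)"] by linarith
    have lowB: "d * real n / 2 \<le> (\<Sum>v\<in>V - Sh. real (deg E v))" using False Vs degsum by linarith
    have ShB: "\<forall>v\<in>V - Sh. real (deg E v) \<le> M" unfolding Sh_def by auto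
    define Kset where "Kset = PiE V (\<lambda>_. {..<r}::nat set)"
    have fK: "finite Kset" unfolding Kset_def using fV by (intro finite_PiE) auto
    have cK: "card Kset = r^n" unfolding Kset_def n_def using fV by (simp add: card_PiE)
    define Q where "Q = (\<lambda>\<kappa>. (\<Sum>v\<in>V - Sh. of_bool (\<kappa> v = 0) * real (gk r E \<kappa> v)))"
    have each: "\<And>\<kappa>. \<kappa> \<in> Kset \<Longrightarrow> c1 / sqrt M * Q \<kappa> \<le> 2 * 2^r * D"
    proof -
      fix \<kappa> assume "\<kappa> \<in> Kset"
      then have col: "\<forall>v\<in>V. \<kappa> v < r" unfolding Kset_def by (auto simp: PiE_iff)
      show "c1 / sqrt M * Q \<kappa> \<le> 2 * 2^r * D"
        unfolding c1_def Q_def D_def using kappa_bound[OF H r1 ph[unfolded p_def] col M0 ShB] .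
    qed
    have "c1 / sqrt M * (\<Sum>\<kappa>\<in>Kset. Q \<kappa>) \<le> (\<Sum>\<kappa>\<in>Kset. 2 * 2^r * D)"
      unfolding sum_distrib_left by (rule sum_mono) (rule each)
    also have "\<dots> = real (r^n) * (2 * 2^r * D)" using cK by simp
    finally have up: "c1 / sqrt M * (\<Sum>\<kappa>\<in>Kset. Q \<kappa>) \<le> real (r^n) * (2 * 2^r * D)" .
    have "(\<Sum>\<kappa>\<in>Kset. Q \<kappa>) = (\<Sum>v\<in>V - Sh. \<Sum>\<kappa>\<in>Kset. of_bool (\<kappa> v = 0) * real (gk r E \<kappa> v))"
      unfolding Q_def by (rule sum.swap)
    also have "\<dots> \<ge> (\<Sum>v\<in>V - Sh. real (r^(n - r)) * real (deg E v))"
      by (rule sum_mono) (use colour_sum[OF H r1] in \<open>auto simp: Kset_def n_def\<close>)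
    finally have "real (r^(n - r)) * (\<Sum>v\<in>V - Sh. real (deg E v)) \<le> (\<Sum>\<kappa>\<in>Kset. Q \<kappa>)"
      by (simp add: sum_distrib_left)
    moreover have "real (r^(n - r)) * (d * real n / 2) \<le> real (r^(n - r)) * (\<Sum>v\<in>V - Sh. real (deg E v))"
      using lowB by (intro mult_left_mono) auto
    ultimately have lo: "real (r^(n - r)) * (d * real n / 2) \<le> (\<Sum>\<kappa>\<in>Kset. Q \<kappa>)"
      by linarith
    have "c1 / sqrt M * (real (r^(n - r)) * (d * real n / 2)) \<le> c1 / sqrt M * (\<Sum>\<kappa>\<in>Kset. Q \<kappa>)"
      using lo c1 M0 by (intro mult_left_mono) auto
    then have "c1 / sqrt M * (real (r^(n - r)) * (d * real n / 2)) \<le> real (r^n) * (2 * 2^r * D)"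
      using up by linarith
    moreover have "real (r^n) = real (r^(n - r)) * real r^r" using rn by (simp add: power_add[symmetric])
    moreover have rnr: "0 < real (r^(n - r))" using r1 by simp
    ultimately have "real (r^(n - r)) * (c1 / sqrt M * (d * real n / 2)) \<le> real (r^(n - r)) * (real r^r * (2 * 2^r * D))"
      by (simp add: mult_ac)
    then have B1: "c1 / sqrt M * (d * real n / 2) \<le> real r^r * (2 * 2^r * D)"
      using rnr by (rule mult_left_le_imp_le)
    have sM: "sqrt M \<le> K * sqrt d"
    proof -
      have "sqrt M = sqrt K * sqrt d" unfolding M_def by (simp add: real_sqrt_mult)
      moreover have "sqrt K \<le> K"
      proof -
        have "sqrt K * 1 \<le> sqrt K * sqrt K" using K1 by (intro mult_left_mono) auto
        then show ?thesis using K1 by simp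
      qed
      ultimately show ?thesis using dpos by (simp add: mult_right_mono)
    qed
    have sd0: "0 < sqrt d" using dpos by simp
    have "c1 / (K * sqrt d) * (d * real n / 2) \<le> c1 / sqrt M * (d * real n / 2)"
    proof (intro mult_right_mono divide_left_mono)
      show "0 < K * sqrt d * sqrt M" using K1 dpos M0 by (intro mult_pos_pos) auto
    qed (use sM c1 dpos in auto)
    also have "c1 / (K * sqrt d) * (d * real n / 2) = c1 * sqrt d * real n / (2 * K)"
    proof -
      have "d = sqrt d * sqrt d" using dpos by simp
      then have "c1 / (K * sqrt d) * (d * real n / 2) = c1 / (K * sqrt d) * (sqrt d * sqrt d * real n / 2)" by simp
      also have "\<dots> = c1 * sqrt d * real n / (2 * K)" using sd0 K1 by (simp add: field_simps)
      finally show ?thesis .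
    qed
    finally have "c1 * sqrt d * real n / (2 * K) \<le> real r^r * (2 * 2^r * D)" using B1 by linarith
    then have "c1 * sqrt d * real n \<le> (2 * K) * (real r^r * (2 * 2^r * D))" using K1 by (simp add: field_simps)
    also have "\<dots> = (4^(r+2) * real r^r) * D"
    proof -
      have "(4::real)^(r+2) = (2*2)^(r+2)" by simp
      also have "\<dots> = 2^(r+2) * 2^(r+2)" by (rule power_mult_distrib)
      also have "\<dots> = 2 * K * (2 * 2^r)" unfolding K_def by simp
      finally have h4: "(2::real) * K * (2 * 2^r) = 4^(r+2)" by simp
      have "(2 * K) * (real r^r * (2 * 2^r * D)) = ((2::real) * K * (2 * 2^r)) * real r^r * D" by (simp only: mult_ac)
      then show ?thesis unfolding h4 by simp
    qed
    finally have "c1 * sqrt d * real n \<le> (4^(r+2) * real r^r) * D" .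
    moreover have Xp: "0 < 4^(r+2) * real r^r" using rr by (intro mult_pos_pos) auto
    ultimately have "c1 * sqrt d * real n / (4^(r+2) * real r^r) \<le> D"
      by (simp add: pos_divide_le_eq mult.commute)
    then have "c1 / (4^(r+2) * real r^r) * sqrt d * real n \<le> D"
      by (simp add: mult.commute mult.left_commute)
    then show ?thesis unfolding goal_c d_def D_def n_def .
  qed
qed

theorem theorem1p3:
  fixes r :: nat
  assumes "r \<ge> 2"
  shows "\<exists>c::real. c > 0 \<and>
    (\<forall>(V :: nat set) (E :: nat set set).
       uniform_hypergraph r V E \<longrightarrow>
       1 \<le> hg_avg_degree r V E \<longrightarrow>
       hg_avg_degree r V E \<le> real (card V - 1 choose (r - 1)) / 2 \<longrightarrow>
       hg_disc r V E \<ge> c * sqrt (hg_avg_degree r V E) * real (card V))"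
proof (intro exI conjI allI impI)
  show "0 < (1/3::real)^(r-1) * (1/2)^r / (4^(r+2) * real r^r)"
    using assms by (intro divide_pos_pos mult_pos_pos) auto
next
  fix V :: "nat set" and E :: "nat set set"
  assume "uniform_hypergraph r V E" "1 \<le> hg_avg_degree r V E"
    "hg_avg_degree r V E \<le> real (card V - 1 choose (r - 1)) / 2"
  then show "(1/3::real)^(r-1) * (1/2)^r / (4^(r+2) * real r^r) * sqrt (hg_avg_degree r V E) * real (card V) \<le> hg_disc r V E"
    using main_bound[OF _ assms] by blast
qed

end
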